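(* Let $p\geq q\geq 1$ be integers and let $M_{pq}$ denote the real vector space of all real $p\times q$ matrices, identified with $\mathbb{R}^{pq}$ and equipped with the Euclidean inner product $\langle X,Y\rangle=\mathrm{tr}(X^TY)$. Let $\Sigma_{pq}=\{X\in M_{pq}:\det(X^TX)=0\}$ be the determinantal variety, i.e. the set of all $p\times q$ real matrices of rank strictly less than $q$. For each integer $r$ with $0\leq r\leq q-1$, let $Z_r\subset\Sigma_{pq}$ be the stratum consisting of all $p\times q$ real matrices of rank exactly $r$. Then every $Z_r$, $0\leq r\leq q-1$, is a regular (embedded) submanifold of $M_{pq}$ which is minimal in $(M_{pq},\langle\cdot,\cdot\rangle)$, i.e. its mean curvature vector vanishes identically.
   Context: A submanifold of a Euclidean space is minimal if its mean curvature vector (the trace of its second fundamental form with respect to the induced metric) vanishes at every point. *)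

theory Defs
  imports "HOL-Analysis.Analysis"
begin

fun Ck_on :: "nat \<Rightarrow> ('a::euclidean_space \<Rightarrow> 'b::euclidean_space) \<Rightarrow> 'a set \<Rightarrow> bool" where
  "Ck_on 0 f W = continuous_on W f"
| "Ck_on (Suc k) f W =
     (f differentiable_on W \<and> (\<forall>a. Ck_on k (\<lambda>v. frechet_derivative f (at v) a) W))"

definition smooth_on :: "('a::euclidean_space \<Rightarrow> 'b::euclidean_space) \<Rightarrow> 'a set \<Rightarrow> bool" where
  "smooth_on f W \<longleftrightarrow> open W \<and> (\<forall>k. Ck_on k f W)"

definition second_deriv :: "('a::euclidean_space \<Rightarrow> 'b::euclidean_space) \<Rightarrow> 'a \<Rightarrow> 'a \<Rightarrow> 'a \<Rightarrow> 'b" where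
  "second_deriv f u a b = frechet_derivative (\<lambda>v. frechet_derivative f (at v) a) (at u) b"

definition normal_part :: "'a::euclidean_space set \<Rightarrow> 'a \<Rightarrow> 'a" where
  "normal_part T v = (THE n. v - n \<in> T \<and> (\<forall>t\<in>T. inner n t = 0))"

text \<open>A smooth local parametrisation (embedding) of Z around x, with parameter domain
 the relatively open set W \<inter> S of a d-dimensional linear subspace S.\<close>
definition local_param ::
  "'a::euclidean_space set \<Rightarrow> nat \<Rightarrow> 'a \<Rightarrow> 'a set \<Rightarrow> 'a set \<Rightarrow> 'a set \<Rightarrow> ('a \<Rightarrow> 'a) \<Rightarrow> bool" where
  "local_param Z d x S W V \<phi> \<longleftrightarrow>
     subspace S \<and> dim S = d \<and> smooth_on \<phi> W \<and> open V \<and> x \<in> V \<and>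
     \<phi> ` (W \<inter> S) = Z \<inter> V \<and> inj_on \<phi> (W \<inter> S) \<and>
     continuous_on (Z \<inter> V) (inv_into (W \<inter> S) \<phi>) \<and>
     (\<forall>u \<in> W \<inter> S. inj_on (frechet_derivative \<phi> (at u)) S)"

definition regular_submanifold :: "'a::euclidean_space set \<Rightarrow> nat \<Rightarrow> bool" where
  "regular_submanifold Z d \<longleftrightarrow> (\<forall>x\<in>Z. \<exists>S W V \<phi>. local_param Z d x S W V \<phi>)"

text \<open>Mean curvature vector at \<phi> u, computed in the parametrisation \<phi>: for a finite set A \<subseteq> S
 whose image under D\<phi>(u) is an orthonormal basis of the tangent space T = D\<phi>(u) S,
 H = \<Sigma>_{a\<in>A} II(D\<phi> a, D\<phi> a) = \<Sigma>_{a\<in>A} (D^2\<phi>(u)(a,a))^\<perp>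
 (trace of the second fundamental form w.r.t. the induced metric).\<close>
definition minimal_submanifold :: "'a::euclidean_space set \<Rightarrow> bool" where
  "minimal_submanifold Z \<longleftrightarrow> (\<exists>d. regular_submanifold Z d \<and>
     (\<forall>x S W V \<phi> u A. local_param Z d x S W V \<phi> \<and> u \<in> W \<inter> S \<and>
        finite A \<and> A \<subseteq> S \<and> card A = d \<and> inj_on (frechet_derivative \<phi> (at u)) A \<and>
        pairwise orthogonal (frechet_derivative \<phi> (at u) ` A) \<and>
        (\<forall>a\<in>A. norm (frechet_derivative \<phi> (at u) a) = 1)
        \<longrightarrow> (\<Sum>a\<in>A. normal_part (frechet_derivative \<phi> (at u) ` S) (second_deriv \<phi> u a a)) = 0))"

end

theory Submission
  imports Defs
begin

definition outer :: "real^'p \<Rightarrow> real^'q \<Rightarrow> real^'q^'p" where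
  "outer y z = (\<chi> i j. y$i * z$j)"

lemma outer_mult: "outer y z *v w = (z \<bullet> w) *\<^sub>R y"
  by (simp add: outer_def matrix_vector_mult_def vec_eq_iff inner_vec_def sum_distrib_left mult_ac)

lemma inner_outer: "M \<bullet> outer y z = y \<bullet> (M *v z)"
  by (simp add: outer_def matrix_vector_mult_def inner_vec_def sum_distrib_left mult_ac)

lemma outer_outer: "outer y z \<bullet> outer y' z' = (y \<bullet> y') * (z \<bullet> z')"
  by (simp add: inner_outer outer_mult inner_commute)

lemma norm_mv: "norm (M *v w) \<le> norm M * norm (w::real^'q)"
  for M :: "real^'q^'p"
proof -
  have "(norm (M *v w))^2 = (\<Sum>i\<in>UNIV. ((M *v w)$i)^2)"
    by (simp add: norm_vec_def L2_set_def real_norm_def sum_nonneg)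
  also have "\<dots> \<le> (\<Sum>i\<in>UNIV. (norm (M$i))^2 * (norm w)^2)"
  proof (rule sum_mono)
    fix i
    have "(M *v w)$i = M$i \<bullet> w" by (simp add: matrix_vector_mult_def inner_vec_def)
    then have "\<bar>(M *v w)$i\<bar> \<le> norm (M$i) * norm w" using Cauchy_Schwarz_ineq2 by simp
    then have "\<bar>(M *v w)$i\<bar>^2 \<le> (norm (M$i) * norm w)^2"
      by (intro power_mono) auto
    then show "((M *v w)$i)^2 \<le> (norm (M$i))^2 * (norm w)^2"
      by (simp add: power_mult_distrib)
  qed
  also have "\<dots> = (\<Sum>i\<in>UNIV. (norm (M$i))^2) * (norm w)^2"
    by (simp add: sum_distrib_right)
  also have "(\<Sum>i\<in>UNIV. (norm (M$i))^2) = (norm M)^2"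
    by (simp add: norm_vec_def L2_set_def sum_nonneg)
  finally have "(norm (M *v w))^2 \<le> (norm M * norm w)^2" by (simp add: power_mult_distrib)
  then show ?thesis by (rule power2_le_imp_le) simp
qed
lemma norm_from_cols:
  fixes M :: "real^'q^'p"
  assumes "\<And>w. norm (M *v w) \<le> c * norm w"
  shows "norm M \<le> real CARD('p) * real CARD('q) * c"
proof -
  have "norm M \<le> (\<Sum>i\<in>UNIV. norm (M$i))" unfolding norm_vec_def by (rule L2_set_le_sum) simp
  also have "\<dots> \<le> (\<Sum>i\<in>(UNIV::'p set). (\<Sum>j\<in>(UNIV::'q set). c))"
  proof (rule sum_mono)
    fix i
    have "norm (M$i) \<le> (\<Sum>j\<in>UNIV. \<bar>M$i$j\<bar>)" by (rule norm_le_l1_cart)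
    also have "\<dots> \<le> (\<Sum>j\<in>(UNIV::'q set). c)"
    proof (rule sum_mono)
      fix j
      have "M$i$j = (M *v axis j 1)$i" by (simp add: matrix_vector_mult_basis column_def)
      then have "\<bar>M$i$j\<bar> \<le> norm (M *v axis j 1)" by (metis component_le_norm_cart)
      also have "\<dots> \<le> c" using assms[of "axis j 1"] by simp
      finally show "\<bar>M$i$j\<bar> \<le> c" .
    qed
    finally show "norm (M$i) \<le> (\<Sum>j\<in>(UNIV::'q set). c)" .
  qed
  also have "\<dots> = real CARD('p) * real CARD('q) * c" by simp
  finally show ?thesis .
qed

lemma Ck_const: "Ck_on k (\<lambda>x. c) W"
proof (induction k arbitrary: c)
  case 0 then show ?case by (simp add: continuous_on_const)
next
  case (Suc k)
  have "\<And>v. frechet_derivative (\<lambda>x. c) (at v) = (\<lambda>h. 0)"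
    by (rule frechet_derivative_at[symmetric]) (rule has_derivative_const)
  then show ?case using Suc by simp
qed

lemma Ck_affine:
  fixes L :: "'a::euclidean_space \<Rightarrow> 'b::euclidean_space"
  assumes "linear L"
  shows "Ck_on k (\<lambda>x. c + L x) W"
proof -
  have bl: "bounded_linear L" using assms linear_conv_bounded_linear by auto
  have d: "\<And>v. ((\<lambda>x. c + L x) has_derivative (\<lambda>h. 0 + L h)) (at v)"
    by (rule has_derivative_add[OF has_derivative_const bounded_linear_imp_has_derivative[OF bl]])
  have fd: "\<And>v. frechet_derivative (\<lambda>x. c + L x) (at v) = (\<lambda>h. 0 + L h)"
    by (rule sym[OF frechet_derivative_at[OF d]])
  have diff: "(\<lambda>x. c + L x) differentiable_on W"
    unfolding differentiable_on_def differentiable_def using d has_derivative_at_withinI by blast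
  show ?thesis
  proof (cases k)
    case 0
    then show ?thesis using diff by (simp add: differentiable_imp_continuous_on)
  next
    case (Suc k')
    then show ?thesis using diff by (simp add: fd Ck_const)
  qed
qed

lemma Ck_quad:
  fixes L :: "'a::euclidean_space \<Rightarrow> 'b::euclidean_space"
  assumes "linear L" and b: "bounded_bilinear b"
  shows "Ck_on k (\<lambda>x. c + L x + b x x) W"
proof -
  have bl: "bounded_linear L" using assms linear_conv_bounded_linear by auto
  have d: "\<And>v. ((\<lambda>x. c + L x + b x x) has_derivative (\<lambda>h. 0 + L h + (b v h + b h v))) (at v)"
    by (rule has_derivative_add[OF has_derivative_add[OF has_derivative_const bounded_linear_imp_has_derivative[OF bl]]
           bounded_bilinear.FDERIV[OF b has_derivative_ident has_derivative_ident]])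
  have fd: "\<And>v. frechet_derivative (\<lambda>x. c + L x + b x x) (at v) = (\<lambda>h. 0 + L h + (b v h + b h v))"
    by (rule sym[OF frechet_derivative_at[OF d]])
  have diff: "(\<lambda>x. c + L x + b x x) differentiable_on W"
    unfolding differentiable_on_def differentiable_def using d has_derivative_at_withinI by blast
  show ?thesis
  proof (cases k)
    case 0
    then show ?thesis using diff by (simp add: differentiable_imp_continuous_on)
  next
    case (Suc k')
    have lin: "linear (\<lambda>v. b v a + b a v)" for a
      using bounded_bilinear.bounded_linear_left[OF b] bounded_bilinear.bounded_linear_right[OF b]
      by (intro linear_compose_add) (auto simp: bounded_linear.linear)
    have "Ck_on k' (\<lambda>v. (0 + L a) + (\<lambda>v. b v a + b a v) v) W" for a
      by (rule Ck_affine[OF lin])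
    then show ?thesis using Suc diff by (simp add: fd)
  qed
qed

lemma smooth_quad:
  fixes L :: "'a::euclidean_space \<Rightarrow> 'b::euclidean_space"
  assumes "linear L" and "bounded_bilinear b" and "open W"
  shows "smooth_on (\<lambda>x. c + L x + b x x) W"
  using assms Ck_quad by (auto simp: smooth_on_def)

lemma ortho_coeff:
  fixes B :: "'a::euclidean_space set"
  assumes "finite B" "pairwise orthogonal B" "\<And>b. b \<in> B \<Longrightarrow> norm b = 1" "b \<in> B"
  shows "b \<bullet> (\<Sum>v\<in>B. c v *\<^sub>R v) = c b"
proof -
  have "b \<bullet> (\<Sum>v\<in>B. c v *\<^sub>R v) = (\<Sum>v\<in>B. c v * (b \<bullet> v))"
    by (simp add: inner_sum_right)
  also have "\<dots> = (\<Sum>v\<in>{b}. c v * (b \<bullet> v))"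
  proof (rule sum.mono_neutral_right)
    show "\<forall>v\<in>B - {b}. c v * (b \<bullet> v) = 0"
      using assms(2,4) by (auto simp: pairwise_def orthogonal_def)
  qed (use assms in auto)
  also have "\<dots> = c b" using assms(3)[OF assms(4)] by (simp add: dot_square_norm)
  finally show ?thesis .
qed

lemma ortho_expand:
  fixes B :: "'a::euclidean_space set"
  assumes "finite B" "pairwise orthogonal B" "\<And>b. b \<in> B \<Longrightarrow> norm b = 1" "z \<in> span B"
  shows "z = (\<Sum>b\<in>B. (b \<bullet> z) *\<^sub>R b)"
proof -
  obtain c where z: "z = (\<Sum>v\<in>B. c v *\<^sub>R v)"
    using assms(4) span_finite[OF assms(1)] by auto
  have "\<And>b. b \<in> B \<Longrightarrow> b \<bullet> z = c b" unfolding z by (rule ortho_coeff[OF assms(1-3)])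
  then show ?thesis unfolding z by (intro sum.cong) auto
qed

lemma normal_part_prop:
  fixes T :: "'a::euclidean_space set"
  assumes "subspace T"
  shows "v - normal_part T v \<in> T \<and> (\<forall>t\<in>T. inner (normal_part T v) t = 0)"
proof -
  obtain y z where y: "y \<in> span T" and z: "\<And>w. w \<in> span T \<Longrightarrow> orthogonal z w" and v: "v = y + z"
    using orthogonal_subspace_decomp_exists[of T v] by blast
  have sT: "span T = T" using assms by (simp add: span_eq_iff)
  have ex: "v - z \<in> T \<and> (\<forall>t\<in>T. inner z t = 0)"
    using y z v sT by (auto simp: orthogonal_def)
  have un: "n = z" if "v - n \<in> T \<and> (\<forall>t\<in>T. inner n t = 0)" for n
  proof -
    have "z - n \<in> T" using that ex subspace_diff[OF assms, of "v - n" "v - z"] by simp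
    then have "inner (z - n) (z - n) = 0" using that ex by (simp add: inner_diff_left)
    then show ?thesis by simp
  qed
  show ?thesis unfolding normal_part_def
    by (rule theI[of _ z]) (use ex un in blast)+
qed

lemma quad_zero:
  fixes \<alpha> \<beta> :: real
  assumes "\<And>e. e > 0 \<Longrightarrow> \<exists>d>0. \<forall>t. 0 < \<bar>t\<bar> \<and> \<bar>t\<bar> < d \<longrightarrow> \<bar>t * \<alpha> + t^2 * \<beta>\<bar> \<le> e * t^2"
  shows "\<alpha> = 0 \<and> \<beta> = 0"
proof -
  have a: "\<alpha> = 0"
  proof (rule ccontr)
    assume "\<alpha> \<noteq> 0"
    obtain d where d: "d > 0" "\<forall>t. 0 < \<bar>t\<bar> \<and> \<bar>t\<bar> < d \<longrightarrow> \<bar>t * \<alpha> + t^2 * \<beta>\<bar> \<le> 1 * t^2"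
      using assms[of 1] by auto
    define t where "t = min (d/2) (\<bar>\<alpha>\<bar> / (2 * (\<bar>\<beta>\<bar> + 1)))"
    have tp: "t > 0" using d \<open>\<alpha> \<noteq> 0\<close> by (simp add: t_def)
    have td: "t < d" using d by (simp add: t_def)
    have "t \<le> \<bar>\<alpha>\<bar> / (2 * (\<bar>\<beta>\<bar> + 1))" by (simp add: t_def)
    then have "t * (2 * (\<bar>\<beta>\<bar> + 1)) \<le> \<bar>\<alpha>\<bar>"
      by (simp add: pos_le_divide_eq)
    then have tb: "t * (\<bar>\<beta>\<bar> + 1) \<le> \<bar>\<alpha>\<bar> / 2"
      by (simp add: algebra_simps)
    have "\<bar>t * \<alpha> + t^2 * \<beta>\<bar> \<le> t^2" using d(2) tp td by auto
    moreover have "\<bar>t * \<alpha> + t^2 * \<beta>\<bar> \<ge> t * \<bar>\<alpha>\<bar> - t^2 * \<bar>\<beta>\<bar>"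
    proof -
      have "\<bar>t*\<alpha>\<bar> - \<bar>t^2*\<beta>\<bar> \<le> \<bar>t * \<alpha> + t^2 * \<beta>\<bar>"
        using abs_triangle_ineq[of "t*\<alpha> + t^2*\<beta>" "-(t^2*\<beta>)"] by simp
      then show ?thesis using tp by (simp add: abs_mult)
    qed
    moreover have "t^2 * (\<bar>\<beta>\<bar> + 1) \<le> t * \<bar>\<alpha>\<bar> / 2"
      using tb tp by (simp add: power2_eq_square mult.assoc)
    ultimately have "t * \<bar>\<alpha>\<bar> \<le> t * \<bar>\<alpha>\<bar> / 2"
      by (simp add: algebra_simps)
    then show False using tp \<open>\<alpha> \<noteq> 0\<close> by simp
  qed
  have b: "\<bar>\<beta>\<bar> \<le> e" if e: "e > 0" for e
  proof -
    obtain d where d: "d > 0" "\<forall>t. 0 < \<bar>t\<bar> \<and> \<bar>t\<bar> < d \<longrightarrow> \<bar>t * \<alpha> + t^2 * \<beta>\<bar> \<le> e * t^2"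
      using assms[OF e] by auto
    have "\<bar>(d/2)^2 * \<beta>\<bar> \<le> e * (d/2)^2" using d(2)[rule_format, of "d/2"] d(1) a by simp
    then show ?thesis using d(1) by (simp add: abs_mult)
  qed
  have "\<beta> = 0"
  proof (rule ccontr)
    assume "\<beta> \<noteq> 0"
    then have "\<bar>\<beta>\<bar> \<le> \<bar>\<beta>\<bar>/2" using b[of "\<bar>\<beta>\<bar>/2"] by simp
    then show False using \<open>\<beta> \<noteq> 0\<close> by simp
  qed
  then show ?thesis using a by simp
qed

lemma deriv_in_open:
  assumes "f differentiable_on W" "open W" "v \<in> W"
  shows "(f has_derivative frechet_derivative f (at v)) (at v)"
proof -
  have "f differentiable (at v within W)" using assms(1,3) unfolding differentiable_on_def by blast
  then have "f differentiable (at v)" using at_within_open[OF assms(3,2)] by simp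
  then show ?thesis by (simp add: frechet_derivative_works)
qed

lemma taylor2:
  fixes \<phi> :: "'a::euclidean_space \<Rightarrow> 'b::euclidean_space"
  assumes C2: "Ck_on (Suc (Suc 0)) \<phi> W" and W: "open W" "u \<in> W" and e: "e > 0"
  shows "\<exists>\<delta>>0. \<forall>t. \<bar>t\<bar> < \<delta> \<longrightarrow> norm (\<phi> (u + t *\<^sub>R a) - \<phi> u - t *\<^sub>R frechet_derivative \<phi> (at u) a
             - (t^2/2) *\<^sub>R second_deriv \<phi> u a a) \<le> e * t^2"
proof -
  define h where "h v = frechet_derivative \<phi> (at v) a" for v
  have d\<phi>: "\<phi> differentiable_on W" using C2 by simp
  have dh: "h differentiable_on W" using C2 unfolding h_def by simp
  have D\<phi>: "\<And>v. v \<in> W \<Longrightarrow> (\<phi> has_derivative frechet_derivative \<phi> (at v)) (at v)"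
    using deriv_in_open[OF d\<phi> W(1)] .
  define Dh where "Dh = frechet_derivative h (at u)"
  have Dh: "(h has_derivative Dh) (at u)" unfolding Dh_def using deriv_in_open[OF dh W] .
  have sd: "second_deriv \<phi> u a a = Dh a" by (simp add: second_deriv_def Dh_def h_def[abs_def])
  have blDh: "bounded_linear Dh" using Dh by (rule has_derivative_bounded_linear)
  have na: "0 < norm a + 1" using norm_ge_zero[of a] by linarith
  define e' where "e' = e / (norm a + 1)"
  have e': "e' > 0" using e na by (simp add: e'_def)
  obtain d1 where d1: "d1 > 0" "\<forall>y. norm (y - u) < d1 \<longrightarrow> norm (h y - h u - Dh (y - u)) \<le> e' * norm (y - u)"
    using Dh e' unfolding has_derivative_at_alt by blast
  obtain d2 where d2: "d2 > 0" "ball u d2 \<subseteq> W" using W open_contains_ball by blast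
  define \<delta> where "\<delta> = min d1 d2 / (norm a + 1)"
  have \<delta>: "\<delta> > 0" using d1(1) d2(1) na by (simp add: \<delta>_def)
  have main: "norm (\<phi> (u + t *\<^sub>R a) - \<phi> u - t *\<^sub>R frechet_derivative \<phi> (at u) a
             - (t^2/2) *\<^sub>R second_deriv \<phi> u a a) \<le> e * t^2" if t: "\<bar>t\<bar> < \<delta>" for t
  proof -
    define c where "c = Dh a"
    define F where "F s = \<phi> (u + s *\<^sub>R a) - (s^2/2) *\<^sub>R c" for s
    define F' where "F' s = h (u + s *\<^sub>R a) - s *\<^sub>R c" for s
    have small: "norm (s *\<^sub>R a) < min d1 d2" if "\<bar>s\<bar> \<le> \<bar>t\<bar>" for s
    proof -
      have "norm (s *\<^sub>R a) = \<bar>s\<bar> * norm a" by simp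
      also have "\<dots> \<le> \<bar>t\<bar> * norm a" using that by (simp add: mult_right_mono)
      also have "\<dots> \<le> \<bar>t\<bar> * (norm a + 1)" by (simp add: mult_left_mono)
      also have "\<dots> < \<delta> * (norm a + 1)" by (rule mult_strict_right_mono[OF t na])
      also have "\<dots> = min d1 d2" using na by (simp add: \<delta>_def)
      finally show ?thesis .
    qed
    have seg: "\<bar>s\<bar> \<le> \<bar>t\<bar>" if "s \<in> closed_segment 0 t" for s
      using segment_bound1[OF that] by simp
    have inW: "u + s *\<^sub>R a \<in> W" if "\<bar>s\<bar> \<le> \<bar>t\<bar>" for s
      using small[OF that] d2(2) by (auto simp: dist_norm)
    have derF: "(F has_vector_derivative F' s) (at s within closed_segment 0 t)"
      if s: "s \<in> closed_segment 0 t" for s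
    proof -
      have g1: "((\<lambda>s. u + s *\<^sub>R a) has_derivative (\<lambda>x. 0 + x *\<^sub>R a)) (at s)"
        by (rule has_derivative_add[OF has_derivative_const bounded_linear_imp_has_derivative[OF bounded_linear_scaleR_left]])
      have g2: "(\<phi> has_derivative frechet_derivative \<phi> (at (u + s *\<^sub>R a))) (at (u + s *\<^sub>R a))"
        using D\<phi> inW seg s by blast
      have g3: "((\<phi> \<circ> (\<lambda>s. u + s *\<^sub>R a)) has_derivative
                 (frechet_derivative \<phi> (at (u + s *\<^sub>R a)) \<circ> (\<lambda>x. 0 + x *\<^sub>R a))) (at s)"
        using diff_chain_at[OF g1] g2 by simp
      have q: "((\<lambda>s. s^2/2) has_derivative (\<lambda>x. s * x)) (at s)"
      proof -
        have "((\<lambda>s. s^2/2) has_field_derivative s) (at s)"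
          by (rule derivative_eq_intros refl | simp)+
        then show ?thesis by (rule has_field_derivative_imp_has_derivative)
      qed
      have g4: "((\<lambda>s. (s^2/2) *\<^sub>R c) has_derivative (\<lambda>x. (s^2/2) *\<^sub>R 0 + (s * x) *\<^sub>R c)) (at s)"
        by (rule has_derivative_scaleR[OF q has_derivative_const])
      have lin: "linear (frechet_derivative \<phi> (at (u + s *\<^sub>R a)))"
        using g2 has_derivative_linear by blast
      have "(F has_derivative (\<lambda>x. (frechet_derivative \<phi> (at (u + s *\<^sub>R a)) \<circ> (\<lambda>x. 0 + x *\<^sub>R a)) x
                 - ((s^2/2) *\<^sub>R 0 + (s * x) *\<^sub>R c))) (at s)"
        unfolding F_def using has_derivative_diff[OF g3 g4] by (simp add: o_def)
      then have "(F has_derivative (\<lambda>x. x *\<^sub>R F' s)) (at s)"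
      proof (rule has_derivative_eq_rhs)
        show "(\<lambda>x. (frechet_derivative \<phi> (at (u + s *\<^sub>R a)) \<circ> (\<lambda>x. 0 + x *\<^sub>R a)) x
                 - ((s^2/2) *\<^sub>R 0 + (s * x) *\<^sub>R c)) = (\<lambda>x. x *\<^sub>R F' s)"
          by (rule ext) (simp add: F'_def h_def linear_scale[OF lin] scaleR_diff_right)
      qed
      then show ?thesis unfolding has_vector_derivative_def by (rule has_derivative_at_withinI)
    qed
    have bnd: "norm (F' s - F' 0) \<le> e' * \<bar>t\<bar> * norm a" if s: "s \<in> closed_segment 0 t" for s
    proof -
      have "F' s - F' 0 = h (u + s *\<^sub>R a) - h u - Dh ((u + s *\<^sub>R a) - u)"
        by (simp add: F'_def c_def linear_scale[OF bounded_linear.linear[OF blDh]])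
      moreover have "norm ((u + s *\<^sub>R a) - u) < d1" using small[OF seg[OF s]] by simp
      ultimately have "norm (F' s - F' 0) \<le> e' * norm (s *\<^sub>R a)" using d1(2) by fastforce
      also have "\<dots> \<le> e' * (\<bar>t\<bar> * norm a)"
        using seg[OF s] e' by (simp add: mult_left_mono mult_right_mono)
      finally show ?thesis by (simp add: mult.assoc)
    qed
    have "norm (F t - F 0 - (t - 0) *\<^sub>R F' 0) \<le> norm (t - 0) * (e' * \<bar>t\<bar> * norm a)"
      by (rule vector_differentiable_bound_linearization[OF derF _ bnd]) auto
    moreover have "F t - F 0 - (t - 0) *\<^sub>R F' 0 = \<phi> (u + t *\<^sub>R a) - \<phi> u - t *\<^sub>R frechet_derivative \<phi> (at u) a
             - (t^2/2) *\<^sub>R second_deriv \<phi> u a a"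
      by (simp add: F_def F'_def h_def sd c_def algebra_simps)
    moreover have "norm (t - 0) * (e' * \<bar>t\<bar> * norm a) \<le> e * t^2"
    proof -
      have "norm a / (norm a + 1) \<le> 1" using na by simp
      then have "e * (norm a / (norm a + 1)) \<le> e * 1" using e by (intro mult_left_mono) auto
      then have "e' * norm a \<le> e" by (simp add: e'_def)
      then have "t^2 * (e' * norm a) \<le> t^2 * e" by (simp add: mult_left_mono)
      then show ?thesis by (simp add: power2_eq_square abs_mult_self mult_ac)
    qed
    ultimately show ?thesis by simp
  qed
  show ?thesis using \<delta> main by blast
qed

definition Rg :: "real^'q^'p \<Rightarrow> (real^'p) set" where "Rg X = range (\<lambda>v. X *v v)"
definition Kr :: "real^'q^'p \<Rightarrow> (real^'q) set" where "Kr X = {w. X *v w = 0}"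
definition Tx :: "real^'q^'p \<Rightarrow> (real^'q^'p) set" where
  "Tx X = {H. \<forall>x\<in>(Rg X)\<^sup>\<bottom>. \<forall>w\<in>Kr X. x \<bullet> (H *v w) = 0}"
definition orthonormal :: "'a::euclidean_space set \<Rightarrow> bool" where
  "orthonormal B \<longleftrightarrow> finite B \<and> pairwise orthogonal B \<and> (\<forall>b\<in>B. norm b = 1)"

lemma sum_mv: "finite A \<Longrightarrow> (sum f A) *v w = (\<Sum>a\<in>A. f a *v w)"
  for f :: "'a \<Rightarrow> real^'q^'p"
  by (induction A rule: finite_induct) (simp_all add: matrix_vector_mult_add_rdistrib)

lemma orthonormal_indep: "orthonormal B \<Longrightarrow> independent B"
  unfolding orthonormal_def by (rule pairwise_orthogonal_independent) auto

lemma orthonormal_expand: "orthonormal B \<Longrightarrow> z \<in> span B \<Longrightarrow> z = (\<Sum>b\<in>B. (b \<bullet> z) *\<^sub>R b)"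
  unfolding orthonormal_def by (rule ortho_expand) auto

lemma orthonormal_coeff: "orthonormal B \<Longrightarrow> b \<in> B \<Longrightarrow> b \<bullet> (\<Sum>v\<in>B. c v *\<^sub>R v) = c b"
  unfolding orthonormal_def by (rule ortho_coeff) auto

lemma orthonormal_dim: "orthonormal B \<Longrightarrow> dim (span B) = card B"
  by (metis dim_eq_card_independent dim_span orthonormal_indep)

lemma subspace_Kr: "subspace (Kr X)"
  unfolding subspace_def Kr_def by (simp add: matrix_vector_right_distrib matrix_vector_mult_scaleR)

lemma subspace_Rg: "subspace (Rg X)"
  unfolding Rg_def by (rule linear_subspace_image[OF matrix_vector_mul_linear subspace_UNIV])

lemma subspace_Tx: "subspace (Tx X)"
  unfolding subspace_def Tx_def
  by (simp add: matrix_vector_mult_add_rdistrib inner_add_right scaleR_matrix_vector_assoc[symmetric])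

lemma inner_mv_bound: "\<bar>x \<bullet> (M *v w)\<bar> \<le> norm x * norm M * norm w"
  for M :: "real^'q^'p"
proof -
  have "\<bar>x \<bullet> (M *v w)\<bar> \<le> norm x * norm (M *v w)" by (rule Cauchy_Schwarz_ineq2)
  also have "\<dots> \<le> norm x * (norm M * norm w)" by (simp add: mult_left_mono norm_mv)
  finally show ?thesis by (simp add: mult.assoc)
qed

lemma inner_mv3_bound: "\<bar>x \<bullet> (A *v (G *v (B *v w)))\<bar> \<le> norm x * norm A * norm G * norm B * norm w"
  for A :: "real^'q^'p" and G :: "real^'p^'q" and B :: "real^'q^'p"
proof -
  have a: "\<bar>x \<bullet> (A *v (G *v (B *v w)))\<bar> \<le> norm x * norm A * norm (G *v (B *v w))" by (rule inner_mv_bound)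
  have "norm (G *v (B *v w)) \<le> norm G * norm (B *v w)" by (rule norm_mv)
  also have "\<dots> \<le> norm G * (norm B * norm w)" by (simp add: mult_left_mono norm_mv)
  finally have "norm x * norm A * norm (G *v (B *v w)) \<le> norm x * norm A * (norm G * (norm B * norm w))"
    by (simp add: mult_left_mono)
  then show ?thesis using a by (simp add: mult_ac)
qed

locale strat =
  fixes X :: "real^'q^'p" and r :: nat
    and B1 B2 :: "(real^'p) set" and C1 C2 :: "(real^'q) set" and G :: "real^'p^'q"
  assumes rk: "rank X = r"
    and B1: "orthonormal B1" "span B1 = Rg X" "card B1 = r"
    and B2: "orthonormal B2" "span B2 = (Rg X)\<^sup>\<bottom>" "card B2 = CARD('p) - r"
    and C1: "orthonormal C1" "span C1 = (Kr X)\<^sup>\<bottom>" "card C1 = r"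
    and C2: "orthonormal C2" "span C2 = Kr X" "card C2 = CARD('q) - r"
    and G: "\<And>y. G *v y \<in> (Kr X)\<^sup>\<bottom>" "\<And>v. v \<in> (Kr X)\<^sup>\<bottom> \<Longrightarrow> G *v (X *v v) = v"
begin

definition Pk :: "real^'q^'q" where "Pk = (\<Sum>c\<in>C2. outer c c)"

lemma finC2: "finite C2" using C2(1) by (simp add: orthonormal_def)

lemma Pk_apply: "Pk *v w = (\<Sum>c\<in>C2. (c \<bullet> w) *\<^sub>R c)"
  unfolding Pk_def by (simp add: sum_mv[OF finC2] outer_mult)

lemma C2_sub: "C2 \<subseteq> Kr X" using C2(2) span_superset by blast

lemma Pk_K: "Pk *v w \<in> Kr X"
proof -
  have "Pk *v w \<in> span C2" unfolding Pk_apply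
    by (intro span_sum span_mul span_base)
  then show ?thesis using C2(2) by simp
qed

lemma Pk_id: "w \<in> Kr X \<Longrightarrow> Pk *v w = w"
  unfolding Pk_apply using orthonormal_expand[OF C2(1), of w] C2(2) by simp

lemma Pk_V: "w \<in> (Kr X)\<^sup>\<bottom> \<Longrightarrow> Pk *v w = 0"
proof -
  assume w: "w \<in> (Kr X)\<^sup>\<bottom>"
  have "\<And>c. c \<in> C2 \<Longrightarrow> c \<bullet> w = 0" using w C2_sub by (auto simp: orthogonal_comp_def orthogonal_def)
  then show ?thesis unfolding Pk_apply by simp
qed

lemma Pv_V: "w - Pk *v w \<in> (Kr X)\<^sup>\<bottom>"
proof -
  have cc: "c \<bullet> (Pk *v w) = c \<bullet> w" if "c \<in> C2" for c
  proof -
    have "c \<bullet> (\<Sum>v\<in>C2. (v \<bullet> w) *\<^sub>R v) = c \<bullet> w" by (rule orthonormal_coeff[OF C2(1) that])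
    then show ?thesis by (simp only: Pk_apply)
  qed
  have o: "orthogonal (w - Pk *v w) c" if "c \<in> C2" for c
    using cc[OF that] by (simp add: orthogonal_def inner_diff_left inner_commute[of w c] inner_commute[of "Pk *v w" c])
  have "orthogonal (w - Pk *v w) k" if "k \<in> Kr X" for k
    using orthogonal_to_span[of k C2 "w - Pk *v w"] o that C2(2) by simp
  then show ?thesis by (auto simp: orthogonal_comp_def orthogonal_commute)
qed

lemma Pk_Pk: "Pk *v (Pk *v w) = Pk *v w"
  using Pk_id Pk_K by blast

lemma X_Pk: "X *v (Pk *v w) = 0"
  using Pk_K by (simp add: Kr_def)

lemma X_Pv: "X *v (w - Pk *v w) = X *v w"
  using X_Pk by (simp add: matrix_vector_right_distrib[symmetric] algebra_simps)

lemma V_K_zero: "v \<in> (Kr X)\<^sup>\<bottom> \<Longrightarrow> v \<in> Kr X \<Longrightarrow> v = 0"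
  using orthogonal_Int_0[OF subspace_Kr, of X] by blast

lemma GX_V: "G *v (X *v z) = z - Pk *v z"
  using G(2)[OF Pv_V, of z] X_Pv by simp

lemma XG_R: "y \<in> Rg X \<Longrightarrow> X *v (G *v y) = y"
proof -
  assume "y \<in> Rg X"
  then obtain z where z: "y = X *v z" by (auto simp: Rg_def)
  show ?thesis unfolding z GX_V X_Pv ..
qed

lemma Rp_Rg: "y \<in> (Rg X)\<^sup>\<bottom>\<^sup>\<bottom> \<Longrightarrow> y \<in> Rg X"
  using orthogonal_comp_self[OF subspace_Rg, of X] by simp

end

context strat begin

lemma subV: "subspace ((Kr X)\<^sup>\<bottom>)" by (rule subspace_orthogonal_comp)

lemma spanV: "span ((Kr X)\<^sup>\<bottom>) = (Kr X)\<^sup>\<bottom>" using subV by simp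

lemma dimV: "dim ((Kr X)\<^sup>\<bottom>) = r"
  using orthonormal_dim[OF C1(1)] C1(2,3) by simp

lemma exists_m: "\<exists>m>0. \<forall>v\<in>(Kr X)\<^sup>\<bottom>. m * norm v \<le> norm (X *v v)"
proof (rule injective_imp_isometric)
  show "closed ((Kr X)\<^sup>\<bottom>)" by (rule closed_subspace[OF subV])
  show "subspace ((Kr X)\<^sup>\<bottom>)" by (rule subV)
  show "bounded_linear ((*v) X)" by simp
  show "\<forall>x\<in>(Kr X)\<^sup>\<bottom>. X *v x = 0 \<longrightarrow> x = 0" using V_K_zero by (simp add: Kr_def)
qed

definition mX where "mX = (SOME m. m > 0 \<and> (\<forall>v\<in>(Kr X)\<^sup>\<bottom>. m * norm v \<le> norm (X *v v)))"

lemma mX: "mX > 0" "\<And>v. v \<in> (Kr X)\<^sup>\<bottom> \<Longrightarrow> mX * norm v \<le> norm (X *v v)"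
  using someI_ex[OF exists_m] unfolding mX_def[symmetric] by auto

lemma lower_Y:
  assumes Y: "norm (Y - X) < mX/2" and v: "v \<in> (Kr X)\<^sup>\<bottom>"
  shows "(mX/2) * norm v \<le> norm (Y *v v)"
proof -
  have "Y *v v = X *v v + (Y - X) *v v" by (simp add: matrix_vector_mult_diff_rdistrib)
  then have "norm (X *v v) \<le> norm (Y *v v) + norm ((Y - X) *v v)"
    by (metis add_diff_cancel_right' norm_triangle_ineq4 diff_add_cancel norm_diff_ineq add.commute)
  moreover have "norm ((Y - X) *v v) \<le> norm (Y - X) * norm v" by (rule norm_mv)
  moreover have "norm (Y - X) * norm v \<le> (mX/2) * norm v" by (rule mult_right_mono) (use Y in auto)
  moreover have "mX * norm v \<le> norm (X *v v)" using mX(2)[OF v] .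
  ultimately show ?thesis by linarith
qed

lemma inj_Y:
  assumes Y: "norm (Y - X) < mX/2"
  shows "inj_on ((*v) Y) ((Kr X)\<^sup>\<bottom>)"
proof (rule inj_onI)
  fix a b assume a: "a \<in> (Kr X)\<^sup>\<bottom>" and b: "b \<in> (Kr X)\<^sup>\<bottom>" and e: "Y *v a = Y *v b"
  have ab: "a - b \<in> (Kr X)\<^sup>\<bottom>" using subspace_diff[OF subV a b] .
  have "Y *v (a - b) = 0" using e by (simp add: matrix_vector_right_distrib[symmetric] algebra_simps)
  then have "(mX/2) * norm (a - b) \<le> 0" using lower_Y[OF Y ab] by simp
  then have "norm (a - b) \<le> 0" using mX(1) by (simp add: mult_le_0_iff)
  then show "a = b" by simp
qed

lemma surj_Y:
  assumes Y: "norm (Y - X) < mX/2" and rY: "rank Y = r"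
  shows "\<exists>\<xi>\<in>(Kr X)\<^sup>\<bottom>. Y *v \<xi> = Y *v z"
proof -
  let ?S = "(\<lambda>v. Y *v v) ` ((Kr X)\<^sup>\<bottom>)"
  let ?T = "range (\<lambda>v. Y *v v)"
  have sS: "subspace ?S" by (rule linear_subspace_image[OF matrix_vector_mul_linear subV])
  have sT: "subspace ?T" by (rule linear_subspace_image[OF matrix_vector_mul_linear subspace_UNIV])
  have dS: "dim ?S = r"
  proof -
    have "inj_on (\<lambda>v. Y *v v) (span ((Kr X)\<^sup>\<bottom>))" unfolding spanV using inj_Y[OF Y] .
    then have "dim ?S = dim ((Kr X)\<^sup>\<bottom>)" by (rule dim_image_eq[OF matrix_vector_mul_linear])
    then show ?thesis using dimV by simp
  qed
  have dT: "dim ?T = r" using rY rank_dim_range[of Y] by simp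
  have "?S = ?T" by (rule subspace_dim_equal[OF sS sT]) (use dS dT in auto)
  moreover have "Y *v z \<in> ?T" by simp
  ultimately have "Y *v z \<in> ?S" by simp
  then show ?thesis by force
qed

end

lemma abs2: "\<bar>u\<bar> \<le> (a::real) \<Longrightarrow> \<bar>v\<bar> \<le> b \<Longrightarrow> \<bar>u + v\<bar> \<le> a + b"
  by (simp add: abs_le_iff)
lemma abs3: "\<bar>u\<bar> \<le> (a::real) \<Longrightarrow> \<bar>v\<bar> \<le> b \<Longrightarrow> \<bar>w\<bar> \<le> c \<Longrightarrow> \<bar>u - v - w\<bar> \<le> a + b + c"
  by (simp add: abs_le_iff)
lemma mono5:
  fixes a b c d e :: real
  assumes "0\<le>a" "a\<le>a'" "0\<le>b" "b\<le>b'" "0\<le>c" "c\<le>c'" "0\<le>d" "d\<le>d'" "0\<le>e" "e\<le>e'"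
  shows "a*b*c*d*e \<le> a'*b'*c'*d'*e'"
proof -
  have 1: "a*b \<le> a'*b'" by (rule mult_mono) (use assms in auto)
  have 2: "a*b*c \<le> a'*b'*c'" by (rule mult_mono[OF 1]) (use assms in auto)
  have 3: "a*b*c*d \<le> a'*b'*c'*d'" by (rule mult_mono[OF 2]) (use assms in auto)
  show ?thesis by (rule mult_mono[OF 3]) (use assms in auto)
qed

context strat begin

lemma second_order:
  fixes \<gamma> :: "real \<Rightarrow> real^'q^'p"
  assumes tay: "\<And>\<epsilon>. \<epsilon> > 0 \<Longrightarrow> \<exists>\<delta>>0. \<forall>t. \<bar>t\<bar> < \<delta> \<longrightarrow> norm (\<gamma> t - X - t *\<^sub>R Y1 - (t^2/2) *\<^sub>R Y2) \<le> \<epsilon> * t^2"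
    and rkg: "\<exists>\<delta>>0. \<forall>t. \<bar>t\<bar> < \<delta> \<longrightarrow> rank (\<gamma> t) = r"
    and x: "x \<in> (Rg X)\<^sup>\<bottom>" and w: "w \<in> Kr X"
  shows "x \<bullet> (Y1 *v w) = 0 \<and> x \<bullet> (Y2 *v w) = 2 * (x \<bullet> (Y1 *v (G *v (Y1 *v w))))"
proof -
  define \<alpha> where "\<alpha> = x \<bullet> (Y1 *v w)"
  define g0 where "g0 = x \<bullet> (Y1 *v (G *v (Y1 *v w)))"
  define \<beta> where "\<beta> = x \<bullet> (Y2 *v w) / 2 - g0"
  define E where "E t = \<gamma> t - X" for t
  define R2 where "R2 t = E t - t *\<^sub>R Y1 - (t^2/2) *\<^sub>R Y2" for t
  have R2E: "\<gamma> t - X - t *\<^sub>R Y1 - (t^2/2) *\<^sub>R Y2 = R2 t" for t by (simp add: R2_def E_def)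
  define nx where "nx = norm x"
  define nw where "nw = norm w"
  define nG where "nG = norm G"
  define n1 where "n1 = norm Y1"
  define n2 where "n2 = norm Y2"
  define K1 where "K1 = 1 + n2/2"
  define K2 where "K2 = n1 + K1"
  have pos: "nx \<ge> 0" "nw \<ge> 0" "nG \<ge> 0" "n1 \<ge> 0" "n2 \<ge> 0" "K1 \<ge> 0" "K2 \<ge> 0"
    by (simp_all add: nx_def nw_def nG_def n1_def n2_def K1_def K2_def)
  obtain \<delta>a where \<delta>a: "\<delta>a > 0" "\<And>t. \<bar>t\<bar> < \<delta>a \<Longrightarrow> norm (R2 t) \<le> 1 * t^2"
    using tay[of 1] unfolding R2E by auto
  obtain \<delta>r where \<delta>r: "\<delta>r > 0" "\<And>t. \<bar>t\<bar> < \<delta>r \<Longrightarrow> rank (\<gamma> t) = r"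
    using rkg by auto
  have E1: "norm (E t - t *\<^sub>R Y1) \<le> K1 * t^2" if t: "\<bar>t\<bar> < \<delta>a" for t
  proof -
    have eq: "E t - t *\<^sub>R Y1 = R2 t + (t^2/2) *\<^sub>R Y2" by (simp add: R2_def)
    have "norm (E t - t *\<^sub>R Y1) \<le> norm (R2 t) + norm ((t^2/2) *\<^sub>R Y2)"
      unfolding eq by (rule norm_triangle_ineq)
    also have "\<dots> \<le> t^2 + (t^2/2) * n2" using \<delta>a(2)[OF t] by (simp add: n2_def)
    also have "\<dots> = K1 * t^2" by (simp add: K1_def algebra_simps)
    finally show ?thesis .
  qed
  have E0: "norm (E t) \<le> K2 * \<bar>t\<bar>" if t: "\<bar>t\<bar> < \<delta>a" "\<bar>t\<bar> < 1" for t
  proof -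
    have "E t = t *\<^sub>R Y1 + (E t - t *\<^sub>R Y1)" by simp
    then have "norm (E t) \<le> norm (t *\<^sub>R Y1) + norm (E t - t *\<^sub>R Y1)"
      by (metis norm_triangle_ineq)
    also have "\<dots> \<le> \<bar>t\<bar> * n1 + K1 * t^2" using E1[OF t(1)] by (simp add: n1_def)
    also have "K1 * t^2 \<le> K1 * \<bar>t\<bar>"
    proof -
      have "t^2 = \<bar>t\<bar> * \<bar>t\<bar>" by (simp add: power2_eq_square)
      also have "\<dots> \<le> \<bar>t\<bar> * 1" by (rule mult_left_mono) (use t(2) in auto)
      finally have "t^2 \<le> \<bar>t\<bar>" by simp
      then show ?thesis by (rule mult_left_mono) (use pos(6) in auto)
    qed
    finally show ?thesis by (simp add: K2_def algebra_simps)
  qed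
  have "\<alpha> = 0 \<and> \<beta> = 0"
  proof (rule quad_zero)
    fix e :: real assume e: "e > 0"
    define e1 where "e1 = e / (2 * (nx * nw + 1))"
    have nxw: "nx * nw \<ge> 0" using pos by simp
    have e1: "e1 > 0" using e nxw unfolding e1_def by (intro divide_pos_pos) auto
    have e1b: "(nx * nw + 1) * e1 = e/2"
    proof -
      have c: "nx * nw + 1 \<noteq> 0" using nxw by linarith
      show ?thesis unfolding e1_def using c by (simp add: field_simps)
    qed
    obtain \<delta>b where \<delta>b: "\<delta>b > 0" "\<And>t. \<bar>t\<bar> < \<delta>b \<Longrightarrow> norm (R2 t) \<le> e1 * t^2"
      using tay[OF e1] unfolding R2E by auto
    define K3 where "K3 = nx * K1 * nG * K2 * nw + nx * n1 * nG * K1 * nw"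
    define K4 where "K4 = nx * K2 * nG * K2 * ((2/mX) * K2 * nw)"
    have K34: "K3 \<ge> 0" "K4 \<ge> 0" using pos mX(1) by (simp_all add: K3_def K4_def)
    define d where "d = min \<delta>a (min 1 (min \<delta>r (min \<delta>b (min (mX / (2 * (K2 + 1))) (e / (2 * (K3 + K4 + 1)))))))"
    have p5: "mX / (2 * (K2 + 1)) > 0" using mX(1) pos(7) by (intro divide_pos_pos) auto
    have p6: "e / (2 * (K3 + K4 + 1)) > 0" using e K34 by (intro divide_pos_pos) auto
    have dpos: "d > 0" unfolding d_def min_less_iff_conj using \<delta>a(1) \<delta>r(1) \<delta>b(1) p5 p6 by simp
    have dle: "d \<le> \<delta>a" "d \<le> 1" "d \<le> \<delta>r" "d \<le> \<delta>b" "d \<le> mX / (2 * (K2 + 1))" "d \<le> e / (2 * (K3 + K4 + 1))"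
      unfolding d_def
      by (rule min.cobounded1, rule min.coboundedI2[OF min.cobounded1],
          rule min.coboundedI2[OF min.coboundedI2[OF min.cobounded1]],
          rule min.coboundedI2[OF min.coboundedI2[OF min.coboundedI2[OF min.cobounded1]]],
          rule min.coboundedI2[OF min.coboundedI2[OF min.coboundedI2[OF min.coboundedI2[OF min.cobounded1]]]],
          rule min.coboundedI2[OF min.coboundedI2[OF min.coboundedI2[OF min.coboundedI2[OF min.cobounded2]]]])
    have "\<forall>t. 0 < \<bar>t\<bar> \<and> \<bar>t\<bar> < d \<longrightarrow> \<bar>t * \<alpha> + t^2 * \<beta>\<bar> \<le> e * t^2"
    proof (intro allI impI)
      fix t :: real assume t: "0 < \<bar>t\<bar> \<and> \<bar>t\<bar> < d"
      have ta: "\<bar>t\<bar> < \<delta>a" and t1: "\<bar>t\<bar> < 1" and tr: "\<bar>t\<bar> < \<delta>r" and tb: "\<bar>t\<bar> < \<delta>b"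
        using t dle by linarith+
      have tm: "\<bar>t\<bar> < mX / (2 * (K2 + 1))" and te: "\<bar>t\<bar> < e / (2 * (K3 + K4 + 1))"
        using t dle by linarith+
      have nE: "norm (E t) \<le> K2 * \<bar>t\<bar>" using E0[OF ta t1] .
      have t3: "\<bar>t\<bar> * t^2 = \<bar>t\<bar>^3" by (simp add: power3_eq_cube power2_eq_square)
      have nD: "norm (E t - t *\<^sub>R Y1) \<le> K1 * t^2" using E1[OF ta] .
      have nEm: "norm (\<gamma> t - X) < mX/2"
      proof -
        have "K2 * \<bar>t\<bar> \<le> (K2 + 1) * \<bar>t\<bar>" by (simp add: mult_right_mono)
        also have "\<dots> < (K2 + 1) * (mX / (2 * (K2 + 1)))"
          using tm pos by (intro mult_strict_left_mono) (auto simp: add_pos_nonneg)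
        also have "\<dots> = mX/2" using pos by (simp add: field_simps add_pos_nonneg)
        finally show ?thesis using nE by (simp add: E_def)
      qed
      obtain \<xi> where \<xi>V: "\<xi> \<in> (Kr X)\<^sup>\<bottom>" and \<xi>: "\<gamma> t *v \<xi> = \<gamma> t *v w"
        using surj_Y[OF nEm \<delta>r(2)[OF tr], of w] by auto
      have Xw: "X *v w = 0" using w by (simp add: Kr_def)
      have gE: "\<gamma> t = X + E t" by (simp add: E_def)
      define ll where "ll = x \<bullet> (\<gamma> t *v w)"
      have ll1: "ll = x \<bullet> (E t *v w)" by (simp add: ll_def gE matrix_vector_mult_add_rdistrib Xw)
      have "(X *v \<xi>) \<bullet> x = 0"
        using x by (auto simp: orthogonal_comp_def orthogonal_def Rg_def)
      then have Xxi: "x \<bullet> (X *v \<xi>) = 0" by (simp add: inner_commute)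
      have xiE: "X *v \<xi> + E t *v \<xi> = E t *v w"
        using \<xi> by (simp add: gE matrix_vector_mult_add_rdistrib Xw)
      have ll2: "ll = x \<bullet> (E t *v \<xi>)"
      proof -
        have "ll = x \<bullet> (X *v \<xi> + E t *v \<xi>)" using ll1 xiE by simp
        then show ?thesis by (simp add: inner_add_right Xxi)
      qed
      have xi_eq: "\<xi> = G *v (E t *v w) - G *v (E t *v \<xi>)"
      proof -
        have "X *v \<xi> = E t *v w - E t *v \<xi>"
          using xiE by (simp add: algebra_simps)
        then have "G *v (X *v \<xi>) = G *v (E t *v w) - G *v (E t *v \<xi>)"
          by (simp add: matrix_vector_right_distrib[symmetric] algebra_simps)
        then show ?thesis using G(2)[OF \<xi>V] by simp
      qed
      have ll3: "ll = x \<bullet> (E t *v (G *v (E t *v w))) - x \<bullet> (E t *v (G *v (E t *v \<xi>)))"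
        unfolding ll2 by (subst xi_eq) (simp add: algebra_simps inner_diff_right)
      have nxi: "norm \<xi> \<le> (2/mX) * (K2 * \<bar>t\<bar> * nw)"
      proof -
        have "(mX/2) * norm \<xi> \<le> norm (\<gamma> t *v \<xi>)" by (rule lower_Y[OF nEm \<xi>V])
        also have "\<dots> = norm (E t *v w)" using xiE \<xi> by (simp add: gE matrix_vector_mult_add_rdistrib)
        also have "\<dots> \<le> norm (E t) * nw" unfolding nw_def by (rule norm_mv)
        also have "\<dots> \<le> K2 * \<bar>t\<bar> * nw" using nE pos by (simp add: mult_right_mono)
        finally show ?thesis using mX(1) by (simp add: field_simps)
      qed
      have b4: "\<bar>x \<bullet> (E t *v (G *v (E t *v \<xi>)))\<bar> \<le> K4 * \<bar>t\<bar>^3"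
      proof -
        have "\<bar>x \<bullet> (E t *v (G *v (E t *v \<xi>)))\<bar> \<le> nx * norm (E t) * nG * norm (E t) * norm \<xi>"
          unfolding nx_def nG_def by (rule inner_mv3_bound)
        also have "\<dots> \<le> nx * (K2 * \<bar>t\<bar>) * nG * (K2 * \<bar>t\<bar>) * ((2/mX) * (K2 * \<bar>t\<bar> * nw))"
          by (rule mono5) (use nE nxi pos in auto)
        also have "\<dots> = K4 * (\<bar>t\<bar> * \<bar>t\<bar> * \<bar>t\<bar>)" by (simp add: K4_def algebra_simps)
        also have "\<bar>t\<bar> * \<bar>t\<bar> * \<bar>t\<bar> = \<bar>t\<bar>^3" by (simp add: power3_eq_cube)
        finally show ?thesis .
      qed
      define D where "D = E t - t *\<^sub>R Y1"
      have Dexp: "E t *v (G *v (E t *v w)) = D *v (G *v (E t *v w)) + t *\<^sub>R (Y1 *v (G *v (D *v w)))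
                   + t^2 *\<^sub>R (Y1 *v (G *v (Y1 *v w)))"
      proof -
        have Et: "E t = D + t *\<^sub>R Y1" by (simp add: D_def)
        show ?thesis unfolding Et
          by (simp add: matrix_vector_mult_add_rdistrib matrix_vector_right_distrib
              scaleR_matrix_vector_assoc[symmetric] matrix_vector_mult_scaleR power2_eq_square algebra_simps)
      qed
      have b3: "\<bar>x \<bullet> (E t *v (G *v (E t *v w))) - t^2 * g0\<bar> \<le> K3 * \<bar>t\<bar>^3"
      proof -
        have "x \<bullet> (E t *v (G *v (E t *v w))) - t^2 * g0
              = x \<bullet> (D *v (G *v (E t *v w))) + t * (x \<bullet> (Y1 *v (G *v (D *v w))))"
          by (simp add: Dexp g0_def inner_add_right)
        moreover have "\<bar>x \<bullet> (D *v (G *v (E t *v w)))\<bar> \<le> nx * (K1 * t^2) * nG * (K2 * \<bar>t\<bar>) * nw"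
        proof -
          have "\<bar>x \<bullet> (D *v (G *v (E t *v w)))\<bar> \<le> nx * norm D * nG * norm (E t) * nw"
            unfolding nx_def nG_def nw_def by (rule inner_mv3_bound)
          also have "\<dots> \<le> nx * (K1 * t^2) * nG * (K2 * \<bar>t\<bar>) * nw"
            by (rule mono5) (use nE nD pos in \<open>auto simp: D_def\<close>)
          finally show ?thesis .
        qed
        moreover have "\<bar>t * (x \<bullet> (Y1 *v (G *v (D *v w))))\<bar> \<le> \<bar>t\<bar> * (nx * n1 * nG * (K1 * t^2) * nw)"
        proof -
          have "\<bar>x \<bullet> (Y1 *v (G *v (D *v w)))\<bar> \<le> nx * n1 * nG * norm D * nw"
            unfolding nx_def nG_def nw_def n1_def by (rule inner_mv3_bound)
          also have "\<dots> \<le> nx * n1 * nG * (K1 * t^2) * nw"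
            by (rule mono5) (use nD pos in \<open>auto simp: D_def\<close>)
          finally show ?thesis by (simp add: abs_mult mult_left_mono)
        qed
        ultimately have "\<bar>x \<bullet> (E t *v (G *v (E t *v w))) - t^2 * g0\<bar>
              \<le> nx * (K1 * t^2) * nG * (K2 * \<bar>t\<bar>) * nw + \<bar>t\<bar> * (nx * n1 * nG * (K1 * t^2) * nw)"
          using abs2 by metis
        also have "\<dots> = K3 * (\<bar>t\<bar> * t^2)" by (simp add: K3_def algebra_simps)
        also have "\<bar>t\<bar> * t^2 = \<bar>t\<bar>^3" by (simp add: t3)
        finally show ?thesis .
      qed
      have bR: "\<bar>x \<bullet> (R2 t *v w)\<bar> \<le> (e/2) * t^2"
      proof -
        have "\<bar>x \<bullet> (R2 t *v w)\<bar> \<le> nx * norm (R2 t) * nw" unfolding nx_def nw_def by (rule inner_mv_bound)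
        also have "\<dots> \<le> nx * (e1 * t^2) * nw"
          using \<delta>b(2)[OF tb] pos by (simp add: mult_left_mono mult_right_mono)
        also have "\<dots> = (nx * nw) * e1 * t^2" by (simp add: algebra_simps)
        also have "\<dots> \<le> (nx * nw + 1) * e1 * t^2" using e1 by (simp add: mult_right_mono)
        also have "\<dots> = (e/2) * t^2" by (simp only: e1b)
        finally show ?thesis .
      qed
      have ll4: "ll = t * \<alpha> + t^2 * (x \<bullet> (Y2 *v w) / 2) + x \<bullet> (R2 t *v w)"
      proof -
        have "E t = t *\<^sub>R Y1 + (t^2/2) *\<^sub>R Y2 + R2 t" by (simp add: R2_def)
        then show ?thesis unfolding ll1 \<alpha>_def
          by (simp add: matrix_vector_mult_add_rdistrib scaleR_matrix_vector_assoc[symmetric] inner_add_right)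
      qed
      have "t * \<alpha> + t^2 * \<beta> = (x \<bullet> (E t *v (G *v (E t *v w))) - t^2 * g0)
              - x \<bullet> (E t *v (G *v (E t *v \<xi>))) - x \<bullet> (R2 t *v w)"
        using ll3 ll4 by (simp add: \<beta>_def algebra_simps)
      then have "\<bar>t * \<alpha> + t^2 * \<beta>\<bar> \<le> K3 * \<bar>t\<bar>^3 + K4 * \<bar>t\<bar>^3 + (e/2) * t^2"
        using abs3[OF b3 b4 bR] by simp
      also have "K3 * \<bar>t\<bar>^3 + K4 * \<bar>t\<bar>^3 \<le> (e/2) * t^2"
      proof -
        have "(K3 + K4) * \<bar>t\<bar> \<le> (K3 + K4 + 1) * \<bar>t\<bar>" by (simp add: mult_right_mono)
        also have "\<dots> \<le> (K3 + K4 + 1) * (e / (2 * (K3 + K4 + 1)))"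
          using te K34 by (intro mult_left_mono) auto
        also have "\<dots> = e/2" using K34 by (simp add: field_simps)
        finally have "(K3 + K4) * \<bar>t\<bar> * t^2 \<le> (e/2) * t^2" by (rule mult_right_mono) simp
        then show ?thesis by (simp add: t3[symmetric] algebra_simps)
      qed
      finally show "\<bar>t * \<alpha> + t^2 * \<beta>\<bar> \<le> e * t^2" by simp
    qed
    then show "\<exists>d>0. \<forall>t. 0 < \<bar>t\<bar> \<and> \<bar>t\<bar> < d \<longrightarrow> \<bar>t * \<alpha> + t^2 * \<beta>\<bar> \<le> e * t^2"
      using dpos by blast
  qed
  then show ?thesis by (simp add: \<alpha>_def \<beta>_def g0_def)
qed

end

lemma orthonormal_union:
  fixes B1 B2 :: "'a::euclidean_space set"
  assumes o1: "orthonormal B1" and o2: "orthonormal B2" and s1: "span B1 = U" and s2: "span B2 = U\<^sup>\<bottom>"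
    and U: "subspace U"
  shows "orthonormal (B1 \<union> B2)" "span (B1 \<union> B2) = UNIV" "B1 \<inter> B2 = {}"
proof -
  have inU: "b \<in> U" if "b \<in> B1" for b using s1 span_superset that by blast
  have inUp: "b \<in> U\<^sup>\<bottom>" if "b \<in> B2" for b using s2 span_superset that by blast
  have cross: "orthogonal a b" if "a \<in> B1" "b \<in> B2" for a b
    using inU[OF that(1)] inUp[OF that(2)] by (auto simp: orthogonal_comp_def)
  have cross': "orthogonal b a" if "a \<in> B1" "b \<in> B2" for a b
    using cross[OF that] orthogonal_commute by blast
  have po: "pairwise orthogonal (B1 \<union> B2)"
    unfolding pairwise_def
  proof (intro ballI impI)
    fix x y assume x: "x \<in> B1 \<union> B2" and y: "y \<in> B1 \<union> B2" and xy: "x \<noteq> y"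
    have p1: "pairwise orthogonal B1" and p2: "pairwise orthogonal B2"
      using o1 o2 by (auto simp: orthonormal_def)
    show "orthogonal x y"
    proof (cases "x \<in> B1")
      case True
      show ?thesis
      proof (cases "y \<in> B1")
        case True
        then show ?thesis using \<open>x \<in> B1\<close> xy p1 by (auto simp: pairwise_def)
      next
        case False
        then show ?thesis using \<open>x \<in> B1\<close> y cross by blast
      qed
    next
      case False
      then have xB2: "x \<in> B2" using x by blast
      show ?thesis
      proof (cases "y \<in> B1")
        case True
        then show ?thesis using xB2 cross' by blast
      next
        case False
        then show ?thesis using xB2 y xy p2 by (auto simp: pairwise_def)
      qed
    qed
  qed
  show "orthonormal (B1 \<union> B2)"
    using o1 o2 po unfolding orthonormal_def by auto
  show "B1 \<inter> B2 = {}"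
  proof (rule ccontr)
    assume "B1 \<inter> B2 \<noteq> {}"
    then obtain b where b: "b \<in> B1" "b \<in> B2" by auto
    have "b \<in> U \<inter> U\<^sup>\<bottom>" using inU inUp b by auto
    then have "b = 0" using orthogonal_Int_0[OF U] by auto
    then show False using o1 b by (auto simp: orthonormal_def)
  qed
  show "span (B1 \<union> B2) = UNIV"
  proof -
    have "z \<in> span (B1 \<union> B2)" for z
    proof -
      have "z \<in> U + U\<^sup>\<bottom>" using subspace_sum_orthogonal_comp[OF U] by simp
      then obtain a b where "a \<in> U" "b \<in> U\<^sup>\<bottom>" "z = a + b" by (auto simp: set_plus_def)
      then show ?thesis unfolding span_Un using s1 s2 by blast
    qed
    then show ?thesis by auto
  qed
qed


context strat begin

definition "Bp = B1 \<union> B2"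
definition "Bq = C1 \<union> C2"

lemma subR: "subspace (Rg X)" by (rule subspace_Rg)

lemma Bp: "orthonormal Bp" "span Bp = UNIV" "B1 \<inter> B2 = {}"
  unfolding Bp_def by (rule orthonormal_union[OF B1(1) B2(1) B1(2) B2(2) subR])+

lemma Bq: "orthonormal Bq" "span Bq = UNIV" "C1 \<inter> C2 = {}"
proof -
  have e: "C2 = C2" ..
  have sK: "span C2 = Kr X" by (rule C2(2))
  have sV: "span C1 = (Kr X)\<^sup>\<bottom>" by (rule C1(2))
  have KK: "(Kr X)\<^sup>\<bottom>\<^sup>\<bottom> = Kr X" by (rule orthogonal_comp_self[OF subspace_Kr])
  have u: "orthonormal (C1 \<union> C2)" "span (C1 \<union> C2) = UNIV" "C1 \<inter> C2 = {}"
    by (rule orthonormal_union[OF C1(1) C2(1) sV _ subV], simp add: KK sK)+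
  then show "orthonormal Bq" "span Bq = UNIV" "C1 \<inter> C2 = {}" unfolding Bq_def by auto
qed

lemma rq: "r \<le> CARD('q)" using rank_bound[of X] rk by simp
lemma rp: "r \<le> CARD('p)" using rank_bound[of X] rk by simp

lemma finB: "finite B1" "finite B2" "finite C1" "finite C2" "finite Bp" "finite Bq"
  using B1(1) B2(1) C1(1) C2(1) Bp(1) Bq(1) by (auto simp: orthonormal_def)

lemma card_Bq: "card Bq = CARD('q)"
  unfolding Bq_def using card_Un_disjoint[OF finB(3,4) Bq(3)] C1(3) C2(3) rq by simp

lemma full_expand:
  fixes M :: "real^'q^'p"
  shows "M = (\<Sum>b\<in>Bp. \<Sum>c\<in>Bq. (b \<bullet> (M *v c)) *\<^sub>R outer b c)"
proof -
  have "M *v w = (\<Sum>b\<in>Bp. \<Sum>c\<in>Bq. (b \<bullet> (M *v c)) *\<^sub>R outer b c) *v w" for w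
  proof -
    have w: "w = (\<Sum>c\<in>Bq. (c \<bullet> w) *\<^sub>R c)" using orthonormal_expand[OF Bq(1)] Bq(2) by simp
    have Mc: "M *v c = (\<Sum>b\<in>Bp. (b \<bullet> (M *v c)) *\<^sub>R b)" for c
      using orthonormal_expand[OF Bp(1)] Bp(2) by simp
    have "M *v w = (\<Sum>c\<in>Bq. (c \<bullet> w) *\<^sub>R (M *v c))"
      by (subst w) (simp add: vec.sum matrix_vector_mult_scaleR)
    also have "\<dots> = (\<Sum>c\<in>Bq. (c \<bullet> w) *\<^sub>R (\<Sum>b\<in>Bp. (b \<bullet> (M *v c)) *\<^sub>R b))"
      using Mc by simp
    also have "\<dots> = (\<Sum>c\<in>Bq. \<Sum>b\<in>Bp. ((b \<bullet> (M *v c)) * (c \<bullet> w)) *\<^sub>R b)"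
      by (simp add: scaleR_sum_right mult.commute)
    also have "\<dots> = (\<Sum>b\<in>Bp. \<Sum>c\<in>Bq. ((b \<bullet> (M *v c)) * (c \<bullet> w)) *\<^sub>R b)"
      by (rule sum.swap)
    also have "\<dots> = (\<Sum>b\<in>Bp. \<Sum>c\<in>Bq. (b \<bullet> (M *v c)) *\<^sub>R outer b c) *v w"
      by (simp add: sum_mv[OF finB(5)] sum_mv[OF finB(6)] scaleR_matrix_vector_assoc[symmetric] outer_mult)
    finally show ?thesis .
  qed
  then show ?thesis by (subst matrix_eq) blast
qed

definition "I1 = (B1 \<times> Bq) \<union> (B2 \<times> C1)"
definition "O1 = (\<lambda>(b,c). outer b c) ` I1"

lemma I1_sub: "I1 \<subseteq> Bp \<times> Bq" unfolding I1_def Bp_def Bq_def by auto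

lemma outer_orth:
  assumes "(b,c) \<in> Bp \<times> Bq" "(b',c') \<in> Bp \<times> Bq"
  shows "outer b c \<bullet> outer b' c' = (if (b,c) = (b',c') then 1 else 0)"
proof -
  have ob: "b \<bullet> b' = (if b = b' then 1 else 0)"
    using assms Bp(1) by (auto simp: orthonormal_def pairwise_def orthogonal_def dot_square_norm)
  have oc: "c \<bullet> c' = (if c = c' then 1 else 0)"
    using assms Bq(1) by (auto simp: orthonormal_def pairwise_def orthogonal_def dot_square_norm)
  show ?thesis by (simp add: outer_outer ob oc)
qed

lemma outer_inj: "inj_on (\<lambda>(b,c). outer b c) (Bp \<times> Bq)"
proof (rule inj_onI)
  fix p p' assume p: "p \<in> Bp \<times> Bq" and p': "p' \<in> Bp \<times> Bq"
    and e: "(\<lambda>(b,c). outer b c) p = (\<lambda>(b,c). outer b c) p'"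
  obtain b c b' c' where pp: "p = (b,c)" "p' = (b',c')" by (cases p, cases p')
  have "outer b c \<bullet> outer b' c' = 1" using e outer_orth[of b c b c] p pp by simp
  then show "p = p'" using outer_orth[of b c b' c'] p p' pp by (auto split: if_splits)
qed

lemma O1_orthonormal: "orthonormal O1"
proof -
  have fin: "finite O1" unfolding O1_def using I1_sub finB(5,6) finite_subset by blast
  have po: "pairwise orthogonal O1"
    unfolding pairwise_def
  proof (intro ballI impI)
    fix u v assume u: "u \<in> O1" and v: "v \<in> O1" and uv: "u \<noteq> v"
    obtain b c where bc: "u = outer b c" "(b,c) \<in> I1" using u unfolding O1_def by auto
    obtain b' c' where bc': "v = outer b' c'" "(b',c') \<in> I1" using v unfolding O1_def by auto
    have neq: "(b,c) \<noteq> (b',c')" using uv bc bc' by auto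
    have m: "(b,c) \<in> Bp \<times> Bq" "(b',c') \<in> Bp \<times> Bq" using bc(2) bc'(2) I1_sub by auto
    have "outer b c \<bullet> outer b' c' = 0" using outer_orth[OF m] neq by simp
    then show "orthogonal u v" using bc bc' by (simp add: orthogonal_def)
  qed
  have n: "\<forall>v\<in>O1. norm v = 1"
  proof
    fix v assume "v \<in> O1"
    then obtain b c where v: "v = outer b c" "(b,c) \<in> I1" unfolding O1_def by auto
    have m: "(b,c) \<in> Bp \<times> Bq" using v(2) I1_sub by auto
    have "v \<bullet> v = 1" using outer_orth[OF m m] v by simp
    then have "(norm v)^2 = 1" by (simp add: dot_square_norm)
    then show "norm v = 1" using norm_ge_zero[of v] by (auto simp: power2_eq_1_iff)
  qed
  show ?thesis using fin po n by (simp add: orthonormal_def)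
qed

lemma outer_in_Tx:
  assumes "b \<in> Rg X \<or> c \<in> (Kr X)\<^sup>\<bottom>"
  shows "outer b c \<in> Tx X"
  unfolding Tx_def
proof (clarify)
  fix x w assume x: "x \<in> (Rg X)\<^sup>\<bottom>" and w: "w \<in> Kr X"
  have "x \<bullet> b = 0 \<or> c \<bullet> w = 0"
    using assms x w by (auto simp: orthogonal_comp_def orthogonal_def inner_commute)
  then show "x \<bullet> (outer b c *v w) = 0" by (auto simp: outer_mult)
qed

lemma Tx_span: "Tx X = span O1"
proof
  show "span O1 \<subseteq> Tx X"
  proof (rule span_minimal[OF _ subspace_Tx])
    show "O1 \<subseteq> Tx X"
    proof
      fix v assume "v \<in> O1"
      then obtain b c where v: "v = outer b c" "(b,c) \<in> I1" unfolding O1_def by auto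
      have bc: "b \<in> B1 \<or> c \<in> C1" using v(2) unfolding I1_def by auto
      have "b \<in> B1 \<Longrightarrow> b \<in> Rg X" using B1(2) span_superset by blast
      moreover have "c \<in> C1 \<Longrightarrow> c \<in> (Kr X)\<^sup>\<bottom>" using C1(2) span_superset by blast
      ultimately have "b \<in> Rg X \<or> c \<in> (Kr X)\<^sup>\<bottom>" using bc by blast
      then show "v \<in> Tx X" using outer_in_Tx v by simp
    qed
  qed
  show "Tx X \<subseteq> span O1"
  proof
    fix H assume H: "H \<in> Tx X"
    let ?f = "\<lambda>(b,c). (b \<bullet> (H *v c)) *\<^sub>R outer b c"
    have "H = (\<Sum>b\<in>Bp. \<Sum>c\<in>Bq. (b \<bullet> (H *v c)) *\<^sub>R outer b c)" by (rule full_expand)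
    also have "\<dots> = (\<Sum>p\<in>Bp \<times> Bq. ?f p)" by (simp add: sum.cartesian_product)
    also have "\<dots> = (\<Sum>p\<in>I1. ?f p)"
    proof (rule sum.mono_neutral_right)
      show "finite (Bp \<times> Bq)" using finB by simp
      show "I1 \<subseteq> Bp \<times> Bq" by (rule I1_sub)
      show "\<forall>p\<in>Bp \<times> Bq - I1. ?f p = 0"
      proof
        fix p assume p: "p \<in> Bp \<times> Bq - I1"
        then obtain b c where bc: "p = (b,c)" "b \<in> B2" "c \<in> C2"
          unfolding I1_def Bp_def Bq_def by auto
        have "b \<in> (Rg X)\<^sup>\<bottom>" using bc B2(2) span_superset by blast
        moreover have "c \<in> Kr X" using bc C2(2) span_superset by blast
        ultimately have "b \<bullet> (H *v c) = 0" using H by (auto simp: Tx_def)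
        then show "?f p = 0" using bc by simp
      qed
    qed
    also have "\<dots> \<in> span O1"
    proof (rule span_sum)
      fix p assume p: "p \<in> I1"
      obtain b c where pbc: "p = (b,c)" by (cases p)
      have "outer b c \<in> O1" using p pbc unfolding O1_def by force
      then have "outer b c \<in> span O1" by (rule span_base)
      then have "(b \<bullet> (H *v c)) *\<^sub>R outer b c \<in> span O1" by (rule span_mul)
      then show "?f p \<in> span O1" using pbc by simp
    qed
    finally show "H \<in> span O1" .
  qed
qed

lemma dim_Tx: "dim (Tx X) = r * CARD('q) + (CARD('p) - r) * r"
proof -
  have "dim (Tx X) = card O1" unfolding Tx_span by (rule orthonormal_dim[OF O1_orthonormal])
  also have "\<dots> = card I1" unfolding O1_def
    by (rule card_image[OF inj_on_subset[OF outer_inj I1_sub]])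
  also have "\<dots> = card (B1 \<times> Bq) + card (B2 \<times> C1)"
    unfolding I1_def using finB Bp(3) by (intro card_Un_disjoint) auto
  also have "\<dots> = r * CARD('q) + (CARD('p) - r) * r"
    using card_Bq B1(3) B2(3) C1(3) by (simp add: card_cartesian_product)
  finally show ?thesis .
qed

end

context strat begin

lemma C1_sub: "C1 \<subseteq> (Kr X)\<^sup>\<bottom>" using C1(2) span_superset by blast

lemma minimal_at:
  fixes \<phi> :: "real^'q^'p \<Rightarrow> real^'q^'p"
  assumes lp: "local_param {Y::real^'q^'p. rank Y = r} d x0 S W V \<phi>"
    and d: "d = r * CARD('q) + (CARD('p) - r) * r"
    and u: "u \<in> W \<inter> S" and \<phi>u: "\<phi> u = X"
    and A: "finite A" "A \<subseteq> S" "card A = d" "inj_on (frechet_derivative \<phi> (at u)) A"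
       "pairwise orthogonal (frechet_derivative \<phi> (at u) ` A)"
       "\<forall>a\<in>A. norm (frechet_derivative \<phi> (at u) a) = 1"
  shows "(\<Sum>a\<in>A. normal_part (frechet_derivative \<phi> (at u) ` S) (second_deriv \<phi> u a a)) = 0"
proof -
  define D where "D = frechet_derivative \<phi> (at u)"
  define Y2 where "Y2 a = second_deriv \<phi> u a a" for a
  have subS: "subspace S" and dimS: "dim S = d" and sm: "smooth_on \<phi> W"
    and img: "\<phi> ` (W \<inter> S) = {Y. rank Y = r} \<inter> V" and injS: "inj_on D S"
    using lp u unfolding local_param_def D_def by auto
  have oW: "open W" and Ck: "\<And>k. Ck_on k \<phi> W" using sm by (auto simp: smooth_on_def)
  have C2: "Ck_on (Suc (Suc 0)) \<phi> W" by (rule Ck)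
  have d\<phi>: "\<phi> differentiable_on W" using C2 by simp
  have uW: "u \<in> W" and uS: "u \<in> S" using u by auto
  have hD: "(\<phi> has_derivative D) (at u)" unfolding D_def by (rule deriv_in_open[OF d\<phi> oW uW])
  have linD: "linear D" using hD by (rule has_derivative_linear)
  obtain \<epsilon> where \<epsilon>: "\<epsilon> > 0" "ball u \<epsilon> \<subseteq> W" using oW uW open_contains_ball by blast
  have so: "x \<bullet> (D a *v w) = 0 \<and> x \<bullet> (Y2 a *v w) = 2 * (x \<bullet> (D a *v (G *v (D a *v w))))"
    if a: "a \<in> S" and x: "x \<in> (Rg X)\<^sup>\<bottom>" and w: "w \<in> Kr X" for a x w
  proof (rule second_order[where \<gamma> = "\<lambda>t. \<phi> (u + t *\<^sub>R a)", OF _ _ x w])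
    fix e :: real assume e: "e > 0"
    show "\<exists>\<delta>>0. \<forall>t. \<bar>t\<bar> < \<delta> \<longrightarrow> norm (\<phi> (u + t *\<^sub>R a) - X - t *\<^sub>R D a - (t^2/2) *\<^sub>R Y2 a) \<le> e * t^2"
      using taylor2[OF C2 oW uW e, of a] \<phi>u by (simp add: D_def Y2_def)
  next
    have na: "0 < norm a + 1" using norm_ge_zero[of a] by linarith
    define \<delta> where "\<delta> = \<epsilon> / (norm a + 1)"
    have \<delta>: "\<delta> > 0" using \<epsilon>(1) na by (simp add: \<delta>_def)
    have "rank (\<phi> (u + t *\<^sub>R a)) = r" if t: "\<bar>t\<bar> < \<delta>" for t
    proof -
      have "norm (t *\<^sub>R a) = \<bar>t\<bar> * norm a" by simp
      also have "\<dots> \<le> \<bar>t\<bar> * (norm a + 1)" by (simp add: mult_left_mono)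
      also have "\<dots> < \<delta> * (norm a + 1)" by (rule mult_strict_right_mono[OF t na])
      also have "\<dots> = \<epsilon>" using na by (simp add: \<delta>_def)
      finally have "u + t *\<^sub>R a \<in> W" using \<epsilon>(2) by (auto simp: dist_norm)
      moreover have "u + t *\<^sub>R a \<in> S" using subS uS a by (simp add: subspace_add subspace_scale)
      ultimately have "\<phi> (u + t *\<^sub>R a) \<in> \<phi> ` (W \<inter> S)" by blast
      then show ?thesis using img by auto
    qed
    then show "\<exists>\<delta>>0. \<forall>t. \<bar>t\<bar> < \<delta> \<longrightarrow> rank (\<phi> (u + t *\<^sub>R a)) = r" using \<delta> by blast
  qed
  define T where "T = D ` S"
  have subT: "subspace T" unfolding T_def by (rule linear_subspace_image[OF linD subS])
  have TTx: "T \<subseteq> Tx X" unfolding T_def Tx_def using so by auto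
  have spS: "span S = S" using subS by simp
  have dimT: "dim T = d"
  proof -
    have "inj_on D (span S)" unfolding spS by (rule injS)
    then have "dim (D ` S) = dim S" by (rule dim_image_eq[OF linD])
    then show ?thesis using dimS by (simp add: T_def)
  qed
  have TeqTx: "T = Tx X"
    by (rule subspace_dim_equal[OF subT subspace_Tx TTx]) (simp add: dim_Tx dimT d)
  define Es where "Es = D ` A"
  have Es_sub: "Es \<subseteq> T" unfolding Es_def T_def using A(2) by auto
  have oEs: "orthonormal Es" using A unfolding orthonormal_def Es_def D_def by auto
  have cEs: "card Es = dim T" unfolding Es_def using card_image[OF A(4)[folded D_def]] A(3) dimT by simp
  have T_span: "T \<subseteq> span Es"
    using card_eq_dim[OF Es_sub cEs] orthonormal_indep[OF oEs] oEs by (auto simp: orthonormal_def)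
  have par: "(\<Sum>a\<in>A. (D a \<bullet> z) * (D a \<bullet> y)) = z \<bullet> y" if z: "z \<in> T" for z y
  proof -
    have "z = (\<Sum>e\<in>Es. (e \<bullet> z) *\<^sub>R e)" using orthonormal_expand[OF oEs] T_span z by blast
    then have "z \<bullet> y = (\<Sum>e\<in>Es. (e \<bullet> z) * (e \<bullet> y))"
      by (metis (no_types, lifting) inner_scaleR_left inner_sum_left sum.cong)
    also have "\<dots> = (\<Sum>a\<in>A. (D a \<bullet> z) * (D a \<bullet> y))"
      unfolding Es_def by (rule sum.reindex_cong[OF A(4)[folded D_def] refl]) simp
    finally show ?thesis by simp
  qed
  define n where "n a = normal_part T (Y2 a)" for a
  have np: "Y2 a - n a \<in> T" "\<And>t. t \<in> T \<Longrightarrow> n a \<bullet> t = 0" for a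
    using normal_part_prop[OF subT, of "Y2 a"] unfolding n_def by auto
  define N where "N = (\<Sum>a\<in>A. n a)"
  have Nperp: "N \<bullet> t = 0" if "t \<in> T" for t
    unfolding N_def using np(2)[OF that] by (simp add: inner_sum_left)
  have outer_perp: "H \<bullet> outer x w = 0" if "H \<in> T" "x \<in> (Rg X)\<^sup>\<bottom>" "w \<in> Kr X" for H x w
    using that TeqTx by (auto simp: inner_outer Tx_def)
  have key: "(\<Sum>a\<in>A. x \<bullet> (D a *v (G *v (D a *v w)))) = 0" if x: "x \<in> (Rg X)\<^sup>\<bottom>" and w: "w \<in> Kr X" for x w
  proof -
    have exp1: "x \<bullet> (D a *v (G *v (D a *v w)))
        = (\<Sum>c\<in>C1. (D a \<bullet> outer x c) * (D a \<bullet> outer (c v* G) w))" for a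
    proof -
      have GV: "G *v (D a *v w) \<in> span C1" using G(1) C1(2) by simp
      define g where "g = G *v (D a *v w)"
      have ge: "g = (\<Sum>c\<in>C1. (c \<bullet> g) *\<^sub>R c)"
        using orthonormal_expand[OF C1(1) GV] unfolding g_def .
      have "D a *v g = D a *v (\<Sum>c\<in>C1. (c \<bullet> g) *\<^sub>R c)" by (rule arg_cong[OF ge])
      also have "\<dots> = (\<Sum>c\<in>C1. (c \<bullet> g) *\<^sub>R (D a *v c))" by (simp add: vec.sum matrix_vector_mult_scaleR)
      finally have "x \<bullet> (D a *v g) = x \<bullet> (\<Sum>c\<in>C1. (c \<bullet> g) *\<^sub>R (D a *v c))" by simp
      then have "x \<bullet> (D a *v (G *v (D a *v w))) = (\<Sum>c\<in>C1. (c \<bullet> (G *v (D a *v w))) * (x \<bullet> (D a *v c)))"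
        by (simp add: inner_sum_right g_def)
      also have "\<dots> = (\<Sum>c\<in>C1. (D a \<bullet> outer x c) * (D a \<bullet> outer (c v* G) w))"
        by (simp add: inner_outer dot_lmul_matrix mult.commute)
      finally show ?thesis .
    qed
    have "(\<Sum>a\<in>A. x \<bullet> (D a *v (G *v (D a *v w))))
        = (\<Sum>a\<in>A. \<Sum>c\<in>C1. (D a \<bullet> outer x c) * (D a \<bullet> outer (c v* G) w))"
      using exp1 by simp
    also have "\<dots> = (\<Sum>c\<in>C1. \<Sum>a\<in>A. (D a \<bullet> outer x c) * (D a \<bullet> outer (c v* G) w))"
      by (rule sum.swap)
    also have "\<dots> = (\<Sum>c\<in>C1. outer x c \<bullet> outer (c v* G) w)"
    proof (rule sum.cong[OF refl])
      fix c assume c: "c \<in> C1"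
      have "outer x c \<in> T" unfolding TeqTx using C1_sub c by (intro outer_in_Tx) auto
      then show "(\<Sum>a\<in>A. (D a \<bullet> outer x c) * (D a \<bullet> outer (c v* G) w)) = outer x c \<bullet> outer (c v* G) w"
        by (rule par)
    qed
    also have "\<dots> = 0"
    proof (rule sum.neutral, rule ballI)
      fix c assume c: "c \<in> C1"
      have "w \<bullet> c = 0" using C1_sub c w by (auto simp: orthogonal_comp_def orthogonal_def)
      then have "c \<bullet> w = 0" by (simp add: inner_commute)
      then show "outer x c \<bullet> outer (c v* G) w = 0" by (simp add: outer_outer)
    qed
    finally show ?thesis .
  qed
  have NTx: "N \<in> Tx X"
    unfolding Tx_def
  proof (clarify)
    fix x w assume x: "x \<in> (Rg X)\<^sup>\<bottom>" and w: "w \<in> Kr X"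
    have "x \<bullet> (N *v w) = N \<bullet> outer x w" by (simp add: inner_outer)
    also have "\<dots> = (\<Sum>a\<in>A. n a \<bullet> outer x w)" by (simp add: N_def inner_sum_left)
    also have "\<dots> = (\<Sum>a\<in>A. 2 * (x \<bullet> (D a *v (G *v (D a *v w)))))"
    proof (rule sum.cong[OF refl])
      fix a assume a: "a \<in> A"
      have "(Y2 a - n a) \<bullet> outer x w = 0" by (rule outer_perp[OF np(1) x w])
      then have "n a \<bullet> outer x w = Y2 a \<bullet> outer x w" by (simp add: inner_diff_left)
      also have "\<dots> = x \<bullet> (Y2 a *v w)" by (simp add: inner_outer)
      also have "\<dots> = 2 * (x \<bullet> (D a *v (G *v (D a *v w))))" using so[OF _ x w] a A(2) by blast
      finally show "n a \<bullet> outer x w = 2 * (x \<bullet> (D a *v (G *v (D a *v w))))" .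
    qed
    also have "\<dots> = 0" using key[OF x w] by (simp add: sum_distrib_left[symmetric])
    finally show "x \<bullet> (N *v w) = 0" .
  qed
  have "N \<bullet> N = 0" using Nperp NTx TeqTx by simp
  then have "N = 0" by simp
  then show ?thesis by (simp add: N_def n_def Y2_def T_def D_def)
qed

end

lemma matrix_add_rdistrib': "(A + B) ** C = A ** C + B ** (C::real^'n^'m)"
  for A B :: "real^'m^'k"
  by (simp add: vec_eq_iff matrix_matrix_mult_def sum.distrib distrib_right)

lemma matrix_sub_rdistrib': "(A - B) ** C = A ** C - B ** (C::real^'n^'m)"
  for A B :: "real^'m^'k"
  by (simp add: vec_eq_iff matrix_matrix_mult_def sum_subtractf left_diff_distrib)

lemma bilinear_mm: "bilinear (\<lambda>(H::real^'q^'p) (K::real^'q^'p). H ** (G::real^'p^'q) ** K ** (P::real^'q^'q))"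
  unfolding bilinear_def
proof (intro conjI allI)
  fix H :: "real^'q^'p"
  show "linear (\<lambda>K. H ** G ** K ** P)"
    by (rule linearI)
      (simp_all add: matrix_add_ldistrib matrix_add_rdistrib' matrix_scalar_ac scalar_matrix_assoc matrix_mul_assoc)
next
  fix K :: "real^'q^'p"
  show "linear (\<lambda>H. H ** G ** K ** P)"
    by (rule linearI)
      (simp_all add: matrix_add_ldistrib matrix_add_rdistrib' matrix_scalar_ac scalar_matrix_assoc matrix_mul_assoc)
qed

lemma linear_rmul: "linear (\<lambda>H::real^'q^'p. H ** (P::real^'q^'q))"
  by (rule linearI) (simp_all add: matrix_add_rdistrib' scalar_matrix_assoc)

context strat begin

definition Pv :: "real^'q^'q" where "Pv = mat 1 - Pk"

lemma Pv_apply: "Pv *v w = w - Pk *v w"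
  by (simp add: Pv_def matrix_vector_mult_diff_rdistrib)

definition phi :: "real^'q^'p \<Rightarrow> real^'q^'p" where
  "phi H = 0 + H ** Pv + H ** G ** H ** Pk"

lemma bb: "bounded_bilinear (\<lambda>(H::real^'q^'p) K. H ** G ** K ** Pk)"
  using bilinear_mm bilinear_conv_bounded_bilinear by blast

lemma phi_smooth: "open W \<Longrightarrow> smooth_on phi W"
  unfolding phi_def[abs_def] by (rule smooth_quad[OF linear_rmul bb])

definition Dphi :: "real^'q^'p \<Rightarrow> real^'q^'p \<Rightarrow> real^'q^'p" where
  "Dphi H K = 0 + K ** Pv + (H ** G ** K ** Pk + K ** G ** H ** Pk)"

lemma phi_deriv: "(phi has_derivative Dphi H) (at H)"
proof -
  have bl: "bounded_linear (\<lambda>H::real^'q^'p. H ** Pv)" using linear_rmul linear_conv_bounded_linear by blast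
  have "((\<lambda>x. 0 + x ** Pv + x ** G ** x ** Pk) has_derivative (\<lambda>h. 0 + h ** Pv + (H ** G ** h ** Pk + h ** G ** H ** Pk))) (at H)"
    by (rule has_derivative_add[OF has_derivative_add[OF has_derivative_const bounded_linear_imp_has_derivative[OF bl]]
           bounded_bilinear.FDERIV[OF bb has_derivative_ident has_derivative_ident]])
  then show ?thesis unfolding phi_def[abs_def] Dphi_def[abs_def] by simp
qed

lemma frechet_phi: "frechet_derivative phi (at H) = Dphi H"
  by (rule sym[OF frechet_derivative_at[OF phi_deriv]])

lemma linear_Dphi: "linear (Dphi H)"
  using phi_deriv has_derivative_linear by blast

lemma phi_cont: "continuous_on UNIV phi"
  using phi_deriv by (meson differentiable_def differentiable_imp_continuous_on differentiable_on_def has_derivative_at_withinI)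

lemma phi_apply: "phi H *v w = H *v (w - Pk *v w) + H *v (G *v (H *v (Pk *v w)))"
  by (simp add: phi_def matrix_vector_mult_add_rdistrib matrix_vector_mul_assoc[symmetric] Pv_apply)

lemma Dphi_apply: "Dphi H K *v w = K *v (w - Pk *v w) + (H *v (G *v (K *v (Pk *v w))) + K *v (G *v (H *v (Pk *v w))))"
  by (simp add: Dphi_def matrix_vector_mult_add_rdistrib matrix_vector_mul_assoc[symmetric] Pv_apply)

lemma Pk_Pv: "Pk *v (w - Pk *v w) = 0"
  by (simp add: matrix_vector_right_distrib[symmetric] algebra_simps Pk_Pk)

lemma Pk_G: "Pk *v (G *v y) = 0" using Pk_V G(1) by blast

lemma V_Pv: "v \<in> (Kr X)\<^sup>\<bottom> \<Longrightarrow> v - Pk *v v = v" using Pk_V by simp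

end

context strat begin

definition xi :: "real^'q^'p \<Rightarrow> real^'q \<Rightarrow> real^'q" where
  "xi Y w = (THE \<xi>. \<xi> \<in> (Kr X)\<^sup>\<bottom> \<and> Y *v \<xi> = Y *v (Pk *v w))"

definition good :: "real^'q^'p \<Rightarrow> bool" where
  "good Y \<longleftrightarrow> norm (Y - X) < mX/2 \<and> rank Y = r"

lemma xi_eq:
  assumes Y: "norm (Y - X) < mX/2" and \<xi>: "\<xi> \<in> (Kr X)\<^sup>\<bottom>" "Y *v \<xi> = Y *v (Pk *v w)"
  shows "xi Y w = \<xi>"
  unfolding xi_def
proof (rule the1_equality)
  show "\<exists>!\<xi>. \<xi> \<in> (Kr X)\<^sup>\<bottom> \<and> Y *v \<xi> = Y *v (Pk *v w)"
    using \<xi> inj_Y[OF Y] unfolding inj_on_def by metis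
  show "\<xi> \<in> (Kr X)\<^sup>\<bottom> \<and> Y *v \<xi> = Y *v (Pk *v w)" using \<xi> by simp
qed

lemma xi_prop:
  assumes "good Y"
  shows "xi Y w \<in> (Kr X)\<^sup>\<bottom>" "Y *v xi Y w = Y *v (Pk *v w)"
proof -
  have Y: "norm (Y - X) < mX/2" "rank Y = r" using assms by (auto simp: good_def)
  obtain \<xi> where \<xi>: "\<xi> \<in> (Kr X)\<^sup>\<bottom>" "Y *v \<xi> = Y *v (Pk *v w)" using surj_Y[OF Y] by blast
  have "xi Y w = \<xi>" by (rule xi_eq[OF Y(1) \<xi>])
  then show "xi Y w \<in> (Kr X)\<^sup>\<bottom>" "Y *v xi Y w = Y *v (Pk *v w)" using \<xi> by auto
qed

lemma xi_linear:
  assumes g: "good Y"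
  shows "linear (xi Y)"
proof -
  have Y: "norm (Y - X) < mX/2" using g by (auto simp: good_def)
  show ?thesis
  proof (rule linearI)
    fix a b
    have "xi Y a + xi Y b \<in> (Kr X)\<^sup>\<bottom>" using xi_prop[OF g] subspace_add[OF subV] by blast
    moreover have "Y *v (xi Y a + xi Y b) = Y *v (Pk *v (a + b))"
      using xi_prop[OF g] by (simp add: matrix_vector_right_distrib)
    ultimately show "xi Y (a + b) = xi Y a + xi Y b" by (intro xi_eq[OF Y])
  next
    fix c a
    have "c *\<^sub>R xi Y a \<in> (Kr X)\<^sup>\<bottom>" using xi_prop[OF g] subspace_scale[OF subV] by blast
    moreover have "Y *v (c *\<^sub>R xi Y a) = Y *v (Pk *v (c *\<^sub>R a))"
      using xi_prop[OF g] by (simp add: matrix_vector_mult_scaleR)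
    ultimately show "xi Y (c *\<^sub>R a) = c *\<^sub>R xi Y a" by (intro xi_eq[OF Y])
  qed
qed

lemma xi_bound:
  assumes g: "good Y"
  shows "(mX/2) * norm (xi Y w) \<le> norm (Y *v (Pk *v w))"
  using lower_Y[of Y "xi Y w"] g xi_prop[OF g] by (auto simp: good_def)

definition psi :: "real^'q^'p \<Rightarrow> real^'q^'p" where
  "psi Y = Y ** Pv + X ** matrix (xi Y)"

lemma psi_apply:
  assumes g: "good Y"
  shows "psi Y *v w = Y *v (w - Pk *v w) + X *v xi Y w"
proof -
  have "matrix (xi Y) *v w = xi Y w" using matrix_vector_mul(2)[OF xi_linear[OF g]] by metis
  then show ?thesis by (simp add: psi_def matrix_vector_mult_add_rdistrib matrix_vector_mul_assoc[symmetric] Pv_apply)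
qed

end

context strat begin

lemma ball_near: "H \<in> ball X (mX/2) \<Longrightarrow> norm (H - X) < mX/2"
  by (simp add: dist_norm norm_minus_commute)

lemma H_Rg: "H \<in> Tx X \<Longrightarrow> w \<in> Kr X \<Longrightarrow> H *v w \<in> Rg X"
proof -
  assume H: "H \<in> Tx X" and w: "w \<in> Kr X"
  have "H *v w \<in> (Rg X)\<^sup>\<bottom>\<^sup>\<bottom>"
    using H w unfolding Tx_def orthogonal_comp_def orthogonal_def by auto
  then show ?thesis by (rule Rp_Rg)
qed

lemma rank_phi:
  assumes H: "H \<in> ball X (mX/2)"
  shows "rank (phi H) = r"
proof -
  have Hn: "norm (H - X) < mX/2" using ball_near[OF H] .
  have "range (\<lambda>w. phi H *v w) = (\<lambda>v. H *v v) ` ((Kr X)\<^sup>\<bottom>)"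
  proof
    show "range (\<lambda>w. phi H *v w) \<subseteq> (\<lambda>v. H *v v) ` ((Kr X)\<^sup>\<bottom>)"
    proof clarify
      fix w
      have "phi H *v w = H *v ((w - Pk *v w) + G *v (H *v (Pk *v w)))"
        by (simp add: phi_apply matrix_vector_right_distrib)
      moreover have "(w - Pk *v w) + G *v (H *v (Pk *v w)) \<in> (Kr X)\<^sup>\<bottom>"
        using subspace_add[OF subV Pv_V G(1)] by blast
      ultimately show "phi H *v w \<in> (\<lambda>v. H *v v) ` ((Kr X)\<^sup>\<bottom>)" by blast
    qed
    show "(\<lambda>v. H *v v) ` ((Kr X)\<^sup>\<bottom>) \<subseteq> range (\<lambda>w. phi H *v w)"
    proof clarify
      fix v assume v: "v \<in> (Kr X)\<^sup>\<bottom>"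
      have "phi H *v v = H *v v" using Pk_V[OF v] by (simp add: phi_apply)
      then show "H *v v \<in> range (\<lambda>w. phi H *v w)" by (metis rangeI)
    qed
  qed
  then have "rank (phi H) = dim ((\<lambda>v. H *v v) ` ((Kr X)\<^sup>\<bottom>))" by (simp add: rank_dim_range)
  also have "\<dots> = dim ((Kr X)\<^sup>\<bottom>)"
    by (rule dim_image_eq[OF matrix_vector_mul_linear]) (unfold spanV, rule inj_Y[OF Hn])
  also have "\<dots> = r" by (rule dimV)
  finally show ?thesis .
qed

lemma psi_phi:
  assumes H: "H \<in> Tx X" and g: "good (phi H)"
  shows "psi (phi H) = H"
proof -
  let ?Y = "phi H"
  have Yn: "norm (?Y - X) < mX/2" using g by (simp add: good_def)
  have "psi ?Y *v w = H *v w" for w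
  proof -
    define gg where "gg = G *v (H *v (Pk *v w))"
    have ggV: "gg \<in> (Kr X)\<^sup>\<bottom>" unfolding gg_def by (rule G(1))
    have Pkg: "Pk *v gg = 0" unfolding gg_def by (rule Pk_G)
    have Y1: "?Y *v (w - Pk *v w) = H *v (w - Pk *v w)" by (simp add: phi_apply Pk_Pv)
    have Y2: "?Y *v gg = H *v gg" by (simp add: phi_apply Pkg)
    have Y3: "?Y *v (Pk *v w) = H *v gg" by (simp add: phi_apply Pk_Pk gg_def)
    have xi1: "xi ?Y w = gg" by (rule xi_eq[OF Yn ggV]) (simp add: Y2 Y3)
    have Xg: "X *v gg = H *v (Pk *v w)" unfolding gg_def by (rule XG_R[OF H_Rg[OF H Pk_K]])
    have "psi ?Y *v w = H *v (w - Pk *v w) + H *v (Pk *v w)" by (simp add: psi_apply[OF g] Y1 xi1 Xg)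
    also have "\<dots> = H *v w" by (simp add: matrix_vector_right_distrib[symmetric])
    finally show ?thesis .
  qed
  then show ?thesis by (subst matrix_eq) blast
qed

lemma phi_psi:
  assumes g: "good Y"
  shows "phi (psi Y) = Y" "psi Y \<in> Tx X"
proof -
  have Yn: "norm (Y - X) < mX/2" using g by (simp add: good_def)
  let ?H = "psi Y"
  have xi0: "xi Y (w - Pk *v w) = 0" for w
    by (rule xi_eq[OF Yn]) (simp_all add: Pk_Pv subspace_0[OF subV])
  have xiPk: "xi Y (Pk *v w) = xi Y w" for w
    by (rule xi_eq[OF Yn xi_prop(1)[OF g]]) (simp add: xi_prop(2)[OF g] Pk_Pk)
  have xiV: "xi Y v = 0" if "v \<in> (Kr X)\<^sup>\<bottom>" for v
    by (rule xi_eq[OF Yn]) (simp_all add: Pk_V[OF that] subspace_0[OF subV])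
  show "phi ?H = Y"
  proof -
    have "phi ?H *v w = Y *v w" for w
    proof -
      define \<xi> where "\<xi> = xi Y w"
      have \<xi>V: "\<xi> \<in> (Kr X)\<^sup>\<bottom>" unfolding \<xi>_def by (rule xi_prop(1)[OF g])
      have H1: "?H *v (w - Pk *v w) = Y *v (w - Pk *v w)"
        by (simp add: psi_apply[OF g] Pk_Pv xi0)
      have H2: "?H *v (Pk *v w) = X *v \<xi>"
        by (simp add: psi_apply[OF g] Pk_Pk xiPk \<xi>_def)
      have G2: "G *v (X *v \<xi>) = \<xi>" by (rule G(2)[OF \<xi>V])
      have H3: "?H *v \<xi> = Y *v \<xi>"
        by (simp add: psi_apply[OF g] Pk_V[OF \<xi>V] xiV[OF \<xi>V])
      have "phi ?H *v w = Y *v (w - Pk *v w) + Y *v \<xi>"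
        by (simp add: phi_apply H1 H2 G2 H3)
      also have "\<dots> = Y *v (w - Pk *v w) + Y *v (Pk *v w)" by (simp add: \<xi>_def xi_prop(2)[OF g])
      also have "\<dots> = Y *v w" by (simp add: matrix_vector_right_distrib[symmetric])
      finally show ?thesis .
    qed
    then show ?thesis by (subst matrix_eq) blast
  qed
  show "?H \<in> Tx X"
    unfolding Tx_def
  proof clarify
    fix x w assume x: "x \<in> (Rg X)\<^sup>\<bottom>" and w: "w \<in> Kr X"
    have "(X *v xi Y w) \<bullet> x = 0" using x by (auto simp: orthogonal_comp_def orthogonal_def Rg_def)
    then have "x \<bullet> (X *v xi Y w) = 0" by (simp add: inner_commute)
    then show "x \<bullet> (?H *v w) = 0" by (simp add: psi_apply[OF g] Pk_id[OF w] inner_add_right)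
  qed
qed

definition K5 where "K5 = norm Pv + norm X * (2/mX) * norm Pk"

lemma K5_nonneg: "K5 \<ge> 0" using mX(1) by (simp add: K5_def)

lemma psi_bound:
  assumes g: "good Y"
  shows "norm (psi Y - X) \<le> real CARD('p) * real CARD('q) * (norm (Y - X) * K5)"
proof (rule norm_from_cols)
  fix w
  have Yw: "Y *v (Pk *v w) = (Y - X) *v (Pk *v w)" by (simp add: matrix_vector_mult_diff_rdistrib X_Pk)
  have eq: "(psi Y - X) *v w = (Y - X) *v (Pv *v w) + X *v xi Y w"
    by (simp add: psi_apply[OF g] matrix_vector_mult_diff_rdistrib Pv_apply X_Pv[of w, symmetric])
  have n1: "norm ((Y - X) *v (Pv *v w)) \<le> norm (Y - X) * (norm Pv * norm w)"
  proof -
    have "norm ((Y - X) *v (Pv *v w)) \<le> norm (Y - X) * norm (Pv *v w)" by (rule norm_mv)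
    also have "\<dots> \<le> norm (Y - X) * (norm Pv * norm w)" by (simp add: mult_left_mono norm_mv)
    finally show ?thesis .
  qed
  have n2: "norm (X *v xi Y w) \<le> norm X * ((2/mX) * (norm (Y - X) * (norm Pk * norm w)))"
  proof -
    have "(mX/2) * norm (xi Y w) \<le> norm ((Y - X) *v (Pk *v w))" using xi_bound[OF g, of w] Yw by simp
    also have "\<dots> \<le> norm (Y - X) * norm (Pk *v w)" by (rule norm_mv)
    also have "\<dots> \<le> norm (Y - X) * (norm Pk * norm w)" by (simp add: mult_left_mono norm_mv)
    finally have "norm (xi Y w) \<le> (2/mX) * (norm (Y - X) * (norm Pk * norm w))"
      using mX(1) by (simp add: field_simps)
    then have "norm X * norm (xi Y w) \<le> norm X * ((2/mX) * (norm (Y - X) * (norm Pk * norm w)))"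
      by (rule mult_left_mono) simp
    then show ?thesis using norm_mv[of X "xi Y w"] by linarith
  qed
  have "norm ((psi Y - X) *v w) \<le> norm ((Y - X) *v (Pv *v w)) + norm (X *v xi Y w)"
    unfolding eq by (rule norm_triangle_ineq)
  also have "\<dots> \<le> norm (Y - X) * (norm Pv * norm w) + norm X * ((2/mX) * (norm (Y - X) * (norm Pk * norm w)))"
    using n1 n2 by linarith
  also have "\<dots> = norm (Y - X) * K5 * norm w" by (simp add: K5_def algebra_simps)
  finally show "norm ((psi Y - X) *v w) \<le> norm (Y - X) * K5 * norm w" .
qed

lemma Dphi_inj:
  assumes H: "H \<in> ball X (mX/2)"
  shows "inj_on (Dphi H) (Tx X)"
proof -
  have Hn: "norm (H - X) < mX/2" using ball_near[OF H] .
  have zero: "K = 0" if K: "K \<in> Tx X" and D0: "Dphi H K = 0" for K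
  proof -
    have a: "K *v (w - Pk *v w) = 0" for w
      using arg_cong[OF D0, of "\<lambda>M. M *v (w - Pk *v w)"] by (simp add: Dphi_apply Pk_Pv Pk_Pk)
    have b: "K *v (G *v y) = 0" for y
      using a[of "G *v y"] by (simp add: Pk_G)
    have c: "H *v (G *v (K *v (Pk *v w))) = 0" for w
      using arg_cong[OF D0, of "\<lambda>M. M *v w"] by (simp add: Dphi_apply a b)
    have d: "G *v (K *v (Pk *v w)) = 0" for w
    proof -
      have "(mX/2) * norm (G *v (K *v (Pk *v w))) \<le> 0"
        using lower_Y[OF Hn G(1)[of "K *v (Pk *v w)"]] c[of w] by simp
      then show ?thesis using mX(1) by (simp add: mult_le_0_iff)
    qed
    have e: "K *v (Pk *v w) = 0" for w
    proof -
      have "K *v (Pk *v w) = X *v (G *v (K *v (Pk *v w)))" using XG_R[OF H_Rg[OF K Pk_K[of w]]] by simp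
      also have "\<dots> = 0" using d[of w] by simp
      finally show ?thesis .
    qed
    have "K *v w = 0" for w
      using a[of w] e[of w] by (simp add: matrix_vector_right_distrib[symmetric] algebra_simps)
    then show "K = 0" by (simp add: matrix_eq)
  qed
  show ?thesis
  proof (rule inj_onI)
    fix K1 K2 assume K1: "K1 \<in> Tx X" and K2: "K2 \<in> Tx X" and e: "Dphi H K1 = Dphi H K2"
    have "Dphi H (K1 - K2) = 0" using e linear_diff[OF linear_Dphi] by simp
    then have "K1 - K2 = 0" using zero subspace_diff[OF subspace_Tx K1 K2] by blast
    then show "K1 = K2" by simp
  qed
qed

end

context strat begin

definition K6 where "K6 Y0 = norm Pv + norm X * ((2/mX) * (norm Pk + (2/mX) * norm Y0 * norm Pk))"

lemma K6_nonneg: "K6 Y0 \<ge> 0" using mX(1) by (simp add: K6_def)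

lemma psi_lip:
  assumes g: "good Y" and g0: "good Y0"
  shows "norm (psi Y - psi Y0) \<le> real CARD('p) * real CARD('q) * (norm (Y - Y0) * K6 Y0)"
proof (rule norm_from_cols)
  fix w
  have Yn: "norm (Y - X) < mX/2" using g by (simp add: good_def)
  define \<xi> where "\<xi> = xi Y w"
  define \<xi>0 where "\<xi>0 = xi Y0 w"
  have \<xi>V: "\<xi> \<in> (Kr X)\<^sup>\<bottom>" and \<xi>0V: "\<xi>0 \<in> (Kr X)\<^sup>\<bottom>"
    unfolding \<xi>_def \<xi>0_def using xi_prop(1)[OF g] xi_prop(1)[OF g0] by auto
  have Y\<xi>: "Y *v \<xi> = Y *v (Pk *v w)" unfolding \<xi>_def by (rule xi_prop(2)[OF g])
  have Y0\<xi>0: "Y0 *v \<xi>0 = Y0 *v (Pk *v w)" unfolding \<xi>0_def by (rule xi_prop(2)[OF g0])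
  have eq: "(psi Y - psi Y0) *v w = (Y - Y0) *v (Pv *v w) + X *v (\<xi> - \<xi>0)"
    by (simp add: psi_apply[OF g] psi_apply[OF g0] matrix_vector_mult_diff_rdistrib Pv_apply
        matrix_vector_right_distrib[symmetric] \<xi>_def \<xi>0_def algebra_simps)
  have n\<xi>0: "norm \<xi>0 \<le> (2/mX) * (norm Y0 * (norm Pk * norm w))"
  proof -
    have "(mX/2) * norm \<xi>0 \<le> norm (Y0 *v (Pk *v w))" unfolding \<xi>0_def by (rule xi_bound[OF g0])
    also have "\<dots> \<le> norm Y0 * norm (Pk *v w)" by (rule norm_mv)
    also have "\<dots> \<le> norm Y0 * (norm Pk * norm w)" by (simp add: mult_left_mono norm_mv)
    finally show ?thesis using mX(1) by (simp add: field_simps)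
  qed
  have Yd: "Y *v (\<xi> - \<xi>0) = (Y - Y0) *v (Pk *v w - \<xi>0)"
    using Y\<xi> Y0\<xi>0 by (simp add: matrix_vector_mult_diff_rdistrib matrix_vector_right_distrib[symmetric] algebra_simps)
  have nd: "norm (\<xi> - \<xi>0) \<le> (2/mX) * (norm (Y - Y0) * (norm Pk * norm w + (2/mX) * (norm Y0 * (norm Pk * norm w))))"
  proof -
    have dV: "\<xi> - \<xi>0 \<in> (Kr X)\<^sup>\<bottom>" using subspace_diff[OF subV \<xi>V \<xi>0V] .
    have "(mX/2) * norm (\<xi> - \<xi>0) \<le> norm (Y *v (\<xi> - \<xi>0))" by (rule lower_Y[OF Yn dV])
    also have "\<dots> \<le> norm (Y - Y0) * norm (Pk *v w - \<xi>0)" unfolding Yd by (rule norm_mv)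
    also have "norm (Pk *v w - \<xi>0) \<le> norm Pk * norm w + (2/mX) * (norm Y0 * (norm Pk * norm w))"
    proof -
      have "norm (Pk *v w - \<xi>0) \<le> norm (Pk *v w) + norm \<xi>0" by (rule norm_triangle_ineq4)
      then show ?thesis using norm_mv[of Pk w] n\<xi>0 by linarith
    qed
    then have "norm (Y - Y0) * norm (Pk *v w - \<xi>0) \<le> norm (Y - Y0) * (norm Pk * norm w + (2/mX) * (norm Y0 * (norm Pk * norm w)))"
      by (rule mult_left_mono) simp
    finally show ?thesis using mX(1) by (simp add: field_simps)
  qed
  have n1: "norm ((Y - Y0) *v (Pv *v w)) \<le> norm (Y - Y0) * (norm Pv * norm w)"
  proof -
    have "norm ((Y - Y0) *v (Pv *v w)) \<le> norm (Y - Y0) * norm (Pv *v w)" by (rule norm_mv)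
    also have "\<dots> \<le> norm (Y - Y0) * (norm Pv * norm w)" by (simp add: mult_left_mono norm_mv)
    finally show ?thesis .
  qed
  have n2: "norm (X *v (\<xi> - \<xi>0)) \<le> norm X * ((2/mX) * (norm (Y - Y0) * (norm Pk * norm w + (2/mX) * (norm Y0 * (norm Pk * norm w)))))"
  proof -
    have "norm X * norm (\<xi> - \<xi>0) \<le> norm X * ((2/mX) * (norm (Y - Y0) * (norm Pk * norm w + (2/mX) * (norm Y0 * (norm Pk * norm w)))))"
      using nd by (rule mult_left_mono) simp
    then show ?thesis using norm_mv[of X "\<xi> - \<xi>0"] by linarith
  qed
  have "norm ((psi Y - psi Y0) *v w) \<le> norm ((Y - Y0) *v (Pv *v w)) + norm (X *v (\<xi> - \<xi>0))"
    unfolding eq by (rule norm_triangle_ineq)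
  also have "\<dots> \<le> norm (Y - Y0) * (norm Pv * norm w) + norm X * ((2/mX) * (norm (Y - Y0) * (norm Pk * norm w + (2/mX) * (norm Y0 * (norm Pk * norm w)))))"
    using n1 n2 by linarith
  also have "\<dots> = norm (Y - Y0) * K6 Y0 * norm w" by (simp add: K6_def algebra_simps)
  finally show "norm ((psi Y - psi Y0) *v w) \<le> norm (Y - Y0) * K6 Y0 * norm w" .
qed

lemma psi_cont: "continuous_on {Y. good Y} psi"
  unfolding continuous_on_iff
proof (intro ballI allI impI)
  fix Y0 e assume Y0: "Y0 \<in> {Y. good Y}" and e: "(0::real) < e"
  define c where "c = real CARD('p) * real CARD('q) * K6 Y0"
  have c: "c \<ge> 0" unfolding c_def by (intro mult_nonneg_nonneg) (simp_all add: K6_nonneg)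
  define d where "d = e / (c + 1)"
  have d: "d > 0" using e c by (simp add: d_def)
  have "\<forall>Y\<in>{Y. good Y}. dist Y Y0 < d \<longrightarrow> dist (psi Y) (psi Y0) < e"
  proof (intro ballI impI)
    fix Y assume Y: "Y \<in> {Y. good Y}" and dY: "dist Y Y0 < d"
    have "dist (psi Y) (psi Y0) \<le> real CARD('p) * real CARD('q) * (norm (Y - Y0) * K6 Y0)"
      using psi_lip Y Y0 by (simp add: dist_norm)
    also have "\<dots> = c * norm (Y - Y0)" by (simp add: c_def)
    also have "\<dots> \<le> c * d" using dY c by (simp add: dist_norm mult_left_mono)
    also have "\<dots> < e"
    proof -
      have "c * d < (c + 1) * d" using d by simp
      also have "\<dots> = e" using c by (simp add: d_def)
      finally show ?thesis .
    qed
    finally show "dist (psi Y) (psi Y0) < e" .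
  qed
  then show "\<exists>d>0. \<forall>Y\<in>{Y. good Y}. dist Y Y0 < d \<longrightarrow> dist (psi Y) (psi Y0) < e" using d by blast
qed

definition eps1 where "eps1 = (mX/2) / (real CARD('p) * real CARD('q) * K5 + 1)"
definition V0 where "V0 = ball X eps1"
definition W0 where "W0 = ball X (mX/2) \<inter> phi -` V0"

lemma eps1: "eps1 > 0" "eps1 \<le> mX/2" "real CARD('p) * real CARD('q) * K5 * eps1 < mX/2"
proof -
  have c: "real CARD('p) * real CARD('q) * K5 \<ge> 0" using K5_nonneg by simp
  show "eps1 > 0" using mX(1) c by (simp add: eps1_def)
  show "eps1 \<le> mX/2" using mX(1) c unfolding eps1_def by (simp add: divide_le_eq_1 field_simps)
  have "real CARD('p) * real CARD('q) * K5 * eps1 < (real CARD('p) * real CARD('q) * K5 + 1) * eps1"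
    using \<open>eps1 > 0\<close> by simp
  also have "\<dots> = mX/2"
  proof -
    have cz: "real CARD('p) * real CARD('q) * K5 + 1 \<noteq> 0" using c by linarith
    show ?thesis unfolding eps1_def using cz by (simp add: field_simps)
  qed
  finally show "real CARD('p) * real CARD('q) * K5 * eps1 < mX/2" .
qed

lemma V0_good: "Y \<in> {Y. rank Y = r} \<inter> V0 \<Longrightarrow> good Y"
  using eps1(2) by (auto simp: good_def V0_def dist_norm norm_minus_commute)

lemma W0_good: "H \<in> W0 \<Longrightarrow> good (phi H)"
  using rank_phi eps1(2) by (auto simp: W0_def good_def V0_def dist_norm norm_minus_commute)

lemma local_param_X:
  "local_param {Y::real^'q^'p. rank Y = r} (r * CARD('q) + (CARD('p) - r) * r) X (Tx X) W0 V0 phi"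
  unfolding local_param_def
proof (intro conjI)
  show "subspace (Tx X)" by (rule subspace_Tx)
  show "dim (Tx X) = r * CARD('q) + (CARD('p) - r) * r" by (rule dim_Tx)
  show oW: "smooth_on phi W0"
    unfolding W0_def V0_def by (intro phi_smooth open_Int open_ball open_vimage phi_cont)
  show "open V0" unfolding V0_def by simp
  show "X \<in> V0" using eps1(1) by (simp add: V0_def)
  have psiW: "psi Y \<in> W0 \<inter> Tx X" and phipsi: "phi (psi Y) = Y" if Y: "Y \<in> {Y. rank Y = r} \<inter> V0" for Y
  proof -
    have g: "good Y" by (rule V0_good[OF Y])
    have "norm (psi Y - X) \<le> real CARD('p) * real CARD('q) * (norm (Y - X) * K5)" by (rule psi_bound[OF g])
    also have "\<dots> \<le> real CARD('p) * real CARD('q) * (eps1 * K5)"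
      using Y K5_nonneg by (auto simp: V0_def dist_norm norm_minus_commute intro!: mult_left_mono mult_right_mono)
    also have "\<dots> < mX/2" using eps1(3) by (simp add: mult_ac)
    finally have "psi Y \<in> ball X (mX/2)" by (simp add: dist_norm norm_minus_commute)
    then show "psi Y \<in> W0 \<inter> Tx X" using phi_psi[OF g] Y by (simp add: W0_def)
    show "phi (psi Y) = Y" by (rule phi_psi(1)[OF g])
  qed
  show "phi ` (W0 \<inter> Tx X) = {Y. rank Y = r} \<inter> V0"
  proof
    show "phi ` (W0 \<inter> Tx X) \<subseteq> {Y. rank Y = r} \<inter> V0"
      using W0_good by (auto simp: W0_def good_def)
    show "{Y. rank Y = r} \<inter> V0 \<subseteq> phi ` (W0 \<inter> Tx X)"
    proof
      fix Y assume Y: "Y \<in> {Y. rank Y = r} \<inter> V0"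
      show "Y \<in> phi ` (W0 \<inter> Tx X)" using psiW[OF Y] phipsi[OF Y] by (metis image_eqI)
    qed
  qed
  show inj: "inj_on phi (W0 \<inter> Tx X)"
  proof (rule inj_onI)
    fix H1 H2 assume H1: "H1 \<in> W0 \<inter> Tx X" and H2: "H2 \<in> W0 \<inter> Tx X" and e: "phi H1 = phi H2"
    have "H1 = psi (phi H1)" using psi_phi H1 W0_good by auto
    also have "\<dots> = psi (phi H2)" using e by simp
    also have "\<dots> = H2" using psi_phi H2 W0_good by auto
    finally show "H1 = H2" .
  qed
  show "continuous_on ({Y. rank Y = r} \<inter> V0) (inv_into (W0 \<inter> Tx X) phi)"
  proof -
    have "continuous_on ({Y. rank Y = r} \<inter> V0) psi"
      by (rule continuous_on_subset[OF psi_cont]) (use V0_good in blast)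
    moreover have "inv_into (W0 \<inter> Tx X) phi Y = psi Y" if "Y \<in> {Y. rank Y = r} \<inter> V0" for Y
      by (rule inv_into_f_eq[OF inj psiW[OF that] phipsi[OF that]])
    ultimately show ?thesis using continuous_on_cong by (metis (no_types, lifting))
  qed
  show "\<forall>u\<in>W0 \<inter> Tx X. inj_on (frechet_derivative phi (at u)) (Tx X)"
    using Dphi_inj by (auto simp: frechet_phi W0_def)
qed

end

lemma dim_UNIV_vec: "dim (UNIV :: (real^'n) set) = CARD('n)"
  by simp

lemma ortho_basis:
  fixes S :: "'a::euclidean_space set"
  assumes "subspace S"
  obtains B where "orthonormal B" "span B = S" "card B = dim S"
proof -
  obtain B where B: "B \<subseteq> S" "pairwise orthogonal B" "\<And>x. x \<in> B \<Longrightarrow> norm x = 1"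
    "independent B" "card B = dim S" "span B = S"
    by (rule orthonormal_basis_subspace[OF assms]) blast
  have "finite B" using B(4) by (rule finiteI_independent)
  then have "orthonormal B" using B by (auto simp: orthonormal_def)
  then show ?thesis using that B by blast
qed

lemma dim_comp:
  fixes U :: "(real^'n) set"
  assumes "subspace U"
  shows "dim (U\<^sup>\<bottom>) + dim U = CARD('n)"
proof -
  have "dim {y \<in> UNIV. \<forall>x \<in> U. orthogonal x y} + dim U = dim (UNIV :: (real^'n) set)"
    by (rule dim_subspace_orthogonal_to_vectors[OF assms subspace_UNIV]) simp
  moreover have "{y \<in> UNIV. \<forall>x \<in> U. orthogonal x y} = U\<^sup>\<bottom>" by (auto simp: orthogonal_comp_def)
  ultimately show ?thesis by simp
qed

lemma strat_exists:
  fixes X :: "real^'q^'p"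
  assumes rk: "rank X = r"
  shows "\<exists>B1 B2 C1 C2 G. strat X r B1 B2 C1 C2 G"
proof -
  have sR: "subspace (Rg X)" by (rule subspace_Rg)
  have sK: "subspace (Kr X)" by (rule subspace_Kr)
  have sV: "subspace ((Kr X)\<^sup>\<bottom>)" by (rule subspace_orthogonal_comp)
  have dR: "dim (Rg X) = r" using rk by (simp add: rank_dim_range Rg_def)
  have XV: "(\<lambda>v. X *v v) ` ((Kr X)\<^sup>\<bottom>) = Rg X"
  proof
    show "(\<lambda>v. X *v v) ` ((Kr X)\<^sup>\<bottom>) \<subseteq> Rg X" by (auto simp: Rg_def)
    show "Rg X \<subseteq> (\<lambda>v. X *v v) ` ((Kr X)\<^sup>\<bottom>)"
    proof
      fix y assume "y \<in> Rg X"
      then obtain z where z: "y = X *v z" by (auto simp: Rg_def)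
      obtain a b where a: "a \<in> span (Kr X)" and b: "\<And>w. w \<in> span (Kr X) \<Longrightarrow> orthogonal b w" and zab: "z = a + b"
        using orthogonal_subspace_decomp_exists[of "Kr X" z] by blast
      have spK: "span (Kr X) = Kr X" using sK by simp
      have aK: "a \<in> Kr X" using a unfolding spK .
      have bV: "b \<in> (Kr X)\<^sup>\<bottom>" using b sK by (auto simp: orthogonal_comp_def orthogonal_commute span_base)
      have "y = X *v b" using z zab aK by (simp add: matrix_vector_right_distrib Kr_def)
      then show "y \<in> (\<lambda>v. X *v v) ` ((Kr X)\<^sup>\<bottom>)" using bV by blast
    qed
  qed
  have injV: "inj_on (\<lambda>v. X *v v) ((Kr X)\<^sup>\<bottom>)"
  proof (rule inj_onI)
    fix a b assume a: "a \<in> (Kr X)\<^sup>\<bottom>" and b: "b \<in> (Kr X)\<^sup>\<bottom>" and e: "X *v a = X *v b"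
    have "a - b \<in> (Kr X)\<^sup>\<bottom>" using subspace_diff[OF sV a b] .
    moreover have "a - b \<in> Kr X" using e by (simp add: Kr_def matrix_vector_right_distrib[symmetric] algebra_simps)
    ultimately have "a - b = 0" using orthogonal_Int_0[OF sK] by blast
    then show "a = b" by simp
  qed
  have dV: "dim ((Kr X)\<^sup>\<bottom>) = r"
  proof -
    have spV: "span ((Kr X)\<^sup>\<bottom>) = (Kr X)\<^sup>\<bottom>" using sV by simp
    have "dim ((\<lambda>v. X *v v) ` ((Kr X)\<^sup>\<bottom>)) = dim ((Kr X)\<^sup>\<bottom>)"
      by (rule dim_image_eq[OF matrix_vector_mul_linear]) (unfold spV, rule injV)
    then show ?thesis using XV dR by simp
  qed
  have KK: "(Kr X)\<^sup>\<bottom>\<^sup>\<bottom> = Kr X" by (rule orthogonal_comp_self[OF sK])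
  have dK: "dim (Kr X) = CARD('q) - r" using dim_comp[OF sV] dV KK by simp
  have dRp: "dim ((Rg X)\<^sup>\<bottom>) = CARD('p) - r" using dim_comp[OF sR] dR by simp
  obtain B1 where B1: "orthonormal B1" "span B1 = Rg X" "card B1 = dim (Rg X)" by (rule ortho_basis[OF sR])
  obtain B2 where B2: "orthonormal B2" "span B2 = (Rg X)\<^sup>\<bottom>" "card B2 = dim ((Rg X)\<^sup>\<bottom>)"
    by (rule ortho_basis[OF subspace_orthogonal_comp])
  obtain C1 where C1: "orthonormal C1" "span C1 = (Kr X)\<^sup>\<bottom>" "card C1 = dim ((Kr X)\<^sup>\<bottom>)" by (rule ortho_basis[OF sV])
  obtain C2 where C2: "orthonormal C2" "span C2 = Kr X" "card C2 = dim (Kr X)" by (rule ortho_basis[OF sK])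
  obtain g where g: "range g \<subseteq> (Kr X)\<^sup>\<bottom>" "linear g" "\<forall>v\<in>(Kr X)\<^sup>\<bottom>. g (X *v v) = v"
    using linear_exists_left_inverse_on[OF matrix_vector_mul_linear sV injV] by blast
  define G where "G = matrix g"
  have Gg: "G *v y = g y" for y unfolding G_def using matrix_vector_mul(2)[OF g(2)] by metis
  have "strat X r B1 B2 C1 C2 G"
  proof
    show "rank X = r" by (rule rk)
    show "orthonormal B1" "span B1 = Rg X" "card B1 = r" using B1 dR by auto
    show "orthonormal B2" "span B2 = (Rg X)\<^sup>\<bottom>" "card B2 = CARD('p) - r" using B2 dRp by auto
    show "orthonormal C1" "span C1 = (Kr X)\<^sup>\<bottom>" "card C1 = r" using C1 dV by auto
    show "orthonormal C2" "span C2 = Kr X" "card C2 = CARD('q) - r" using C2 dK by auto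
    show "\<And>y. G *v y \<in> (Kr X)\<^sup>\<bottom>" using g(1) Gg by auto
    show "\<And>v. v \<in> (Kr X)\<^sup>\<bottom> \<Longrightarrow> G *v (X *v v) = v" using g(3) Gg by auto
  qed
  then show ?thesis by blast
qed

theorem theorem1:
  fixes r :: nat
  assumes "CARD('p::finite) \<ge> CARD('q::finite)"
    and "r < CARD('q)"
  shows "(\<exists>d. regular_submanifold {X :: real^'q^'p. rank X = r} d) \<and>
         minimal_submanifold {X :: real^'q^'p. rank X = r}"
proof -
  define d where "d = r * CARD('q) + (CARD('p) - r) * r"
  have reg: "regular_submanifold {X :: real^'q^'p. rank X = r} d"
    unfolding regular_submanifold_def
  proof
    fix X :: "real^'q^'p" assume "X \<in> {X. rank X = r}"
    then obtain B1 B2 C1 C2 G where s: "strat X r B1 B2 C1 C2 G" using strat_exists by blast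
    show "\<exists>S W V \<phi>. local_param {X :: real^'q^'p. rank X = r} d X S W V \<phi>"
      using strat.local_param_X[OF s] unfolding d_def by blast
  qed
  have min: "minimal_submanifold {X :: real^'q^'p. rank X = r}"
    unfolding minimal_submanifold_def
  proof (intro exI conjI allI impI)
    show "regular_submanifold {X :: real^'q^'p. rank X = r} d" by (rule reg)
    fix x S W V \<phi> u A
    assume H: "local_param {X :: real^'q^'p. rank X = r} d x S W V \<phi> \<and> u \<in> W \<inter> S \<and>
        finite A \<and> A \<subseteq> S \<and> card A = d \<and> inj_on (frechet_derivative \<phi> (at u)) A \<and>
        pairwise orthogonal (frechet_derivative \<phi> (at u) ` A) \<and>
        (\<forall>a\<in>A. norm (frechet_derivative \<phi> (at u) a) = 1)"
    have "\<phi> u \<in> \<phi> ` (W \<inter> S)" using H by blast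
    then have "rank (\<phi> u) = r" using H unfolding local_param_def by auto
    then obtain B1 B2 C1 C2 G where s: "strat (\<phi> u) r B1 B2 C1 C2 G" using strat_exists by blast
    show "(\<Sum>a\<in>A. normal_part (frechet_derivative \<phi> (at u) ` S) (second_deriv \<phi> u a a)) = 0"
      by (rule strat.minimal_at[OF s, of d x S W V \<phi> u A]) (use H d_def in auto)
  qed
  show ?thesis using reg min by blast
qed

end
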